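(* For all $w,v\in\mathbb{C}$: $S_n(w;v)$ remains bounded as real $n\to\infty$ if and only if $w\in\mathcal{X}\cup\mathcal{Y}\cup\mathcal{S}$. Also (for $w\neq0$) $T_n(w;v)$ remains bounded as $n\to\infty$ if and only if $w\in\mathcal{X}\cup\mathcal{Z}\cup\mathcal{T}$.
   Context: Principal logarithm branch (arguments in $(-\pi,\pi]$); $(nw)^{-(n+v)}=e^{-(n+v)\log n}e^{-(n+v)\log w}$. For real $n>0$ with $\mathrm{Re}(n+v)>-1$: $S_n(w;v)=1+nw\int_0^1 e^{nw(1-z)}z^{n+v}\,dz$ and, for $w\ne0$, $T_n(w;v)=e^{nw}(nw)^{-(n+v)}\Gamma(n+v+1)-S_n(w;v)$. Regions: $\mathcal{X}=\{w:|we^{1-w}|>1\}$; $\mathcal{Y}=\{w:|we^{1-w}|<1,\mathrm{Re}(w)<1\}$; $\mathcal{Z}=\{w:|we^{1-w}|<1,\mathrm{Re}(w)>1\}$; $\mathcal{S}=\{w:|we^{1-w}|=1,\mathrm{Re}(w)<1\}$; $\mathcal{T}=\{w:|we^{1-w}|=1,\mathrm{Re}(w)>1\}$ (the point $w=1$ lies in none of them). *)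

theory Defs
  imports "HOL-Analysis.Analysis"
begin

definition S_fun :: "real \<Rightarrow> complex \<Rightarrow> complex \<Rightarrow> complex" where
  "S_fun n w v = 1 + of_real n * w *
     integral {0..1} (\<lambda>z::real. exp (of_real n * w * (1 - of_real z)) * (of_real z) powr (of_real n + v))"

text \<open>T_n(w;v) = e^{nw} (nw)^{-(n+v)} Gamma(n+v+1) - S_n(w;v),
  with (nw)^{-(n+v)} = e^{-(n+v) log n} e^{-(n+v) Log w}.\<close>
definition T_fun :: "real \<Rightarrow> complex \<Rightarrow> complex \<Rightarrow> complex" where
  "T_fun n w v = exp (of_real n * w) * exp (- (of_real n + v) * of_real (ln n))
     * exp (- (of_real n + v) * Ln w) * Gamma (of_real n + v + 1) - S_fun n w v"

definition regX :: "complex set" where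
  "regX = {w. norm (w * exp (1 - w)) > 1}"
definition regY :: "complex set" where
  "regY = {w. norm (w * exp (1 - w)) < 1 \<and> Re w < 1}"
definition regZ :: "complex set" where
  "regZ = {w. norm (w * exp (1 - w)) < 1 \<and> Re w > 1}"
definition regS :: "complex set" where
  "regS = {w. norm (w * exp (1 - w)) = 1 \<and> Re w < 1}"
definition regT :: "complex set" where
  "regT = {w. norm (w * exp (1 - w)) = 1 \<and> Re w > 1}"

end

theory Submission
  imports Defs "HOL-Complex_Analysis.Complex_Analysis" "HOL-Real_Asymp.Real_Asymp"
begin


definition gI :: "real \<Rightarrow> complex \<Rightarrow> complex \<Rightarrow> real \<Rightarrow> complex" where
  "gI n w v t = exp (of_real n * w * (1 - of_real t)) * (of_real t) powr (of_real n + v)"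

lemma S_fun_gI: "S_fun n w v = 1 + of_real n * w * integral {0..1} (gI n w v)"
  unfolding S_fun_def gI_def by simp

lemma norm_gI:
  assumes "t \<ge> 0"
  shows "norm (gI n w v t) = exp (n * Re w * (1 - t)) * t powr (n + Re v)"
  using assms unfolding gI_def
  by (simp add: norm_mult norm_exp_eq_Re norm_powr_real_powr)

lemma powr_le_exp:
  fixes t m :: real
  assumes "t \<ge> 0" "m \<ge> 0"
  shows "t powr m \<le> exp (m * (t - 1))"
proof (cases "t = 0")
  case True thus ?thesis by auto
next
  case False
  hence "t > 0" using assms by simp
  hence "ln t \<le> t - 1" by (rule ln_le_minus_one)
  hence "m * ln t \<le> m * (t - 1)" using assms by (simp add: mult_left_mono)
  thus ?thesis using \<open>t > 0\<close> by (simp add: powr_def)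
qed

lemma bound1:
  assumes "t \<ge> 0" "n + Re v \<ge> 0"
  shows "norm (gI n w v t) \<le> exp ((n * Re w - (n + Re v)) * (1 - t))"
proof -
  have "norm (gI n w v t) = exp (n * Re w * (1 - t)) * t powr (n + Re v)"
    using norm_gI[OF assms(1)] .
  also have "\<dots> \<le> exp (n * Re w * (1 - t)) * exp ((n + Re v) * (t - 1))"
    using powr_le_exp[OF assms] by simp
  also have "\<dots> = exp ((n * Re w - (n + Re v)) * (1 - t))"
    by (simp add: exp_add[symmetric] algebra_simps)
  finally show ?thesis .
qed

lemma cont_gI:
  assumes "n + Re v > 0"
  shows "continuous_on {0..} (gI n w v)"
  unfolding gI_def
  using assms by (intro continuous_intros) auto

lemma int_gI:
  assumes "n + Re v > 0" "0 \<le> a"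
  shows "gI n w v integrable_on {a..b}"
  by (rule integrable_continuous_real, rule continuous_on_subset[OF cont_gI[OF assms(1)]]) (use assms in auto)

lemma exp_has_integral:
  fixes lam :: real
  assumes "lam \<noteq> 0" "a \<le> b"
  shows "((\<lambda>t. exp (lam * (t - c))) has_integral (exp (lam * (b - c)) - exp (lam * (a - c))) / lam) {a..b}"
proof -
  have "((\<lambda>t. exp (lam * (t - c))) has_integral ((\<lambda>t. exp (lam * (t - c)) / lam) b - (\<lambda>t. exp (lam * (t - c)) / lam) a)) {a..b}"
    apply (rule fundamental_theorem_of_calculus[OF assms(2)])
    apply (subst has_real_derivative_iff_has_vector_derivative[symmetric])
    using assms(1) by (auto intro!: derivative_eq_intros)
  thus ?thesis by (simp add: diff_divide_distrib)
qed

lemma exp_int_le1: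
  fixes lam :: real
  assumes "lam > 0"
  shows "integral {0..1} (\<lambda>t. exp (- lam * (1 - t))) \<le> 1 / lam"
proof -
  have "((\<lambda>t. exp (lam * (t - 1))) has_integral (exp (lam * (1 - 1)) - exp (lam * (0 - 1))) / lam) {0..1}"
    using assms by (intro exp_has_integral) auto
  moreover have "(\<lambda>t. exp (- lam * (1 - t))) = (\<lambda>t. exp (lam * (t - 1)))"
    by (auto simp: algebra_simps)
  ultimately have "integral {0..1} (\<lambda>t. exp (- lam * (1 - t))) = (1 - exp (- lam)) / lam"
    by (simp add: integral_unique)
  also have "\<dots> \<le> 1 / lam" using assms by (intro divide_right_mono) auto
  finally show ?thesis .
qed

lemma exp_int_le2:
  fixes lam :: real
  assumes "lam > 0" "1 \<le> X"
  shows "integral {1..X} (\<lambda>t. exp (- lam * (t - 1))) \<le> 1 / lam"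
proof -
  have "((\<lambda>t. exp ((-lam) * (t - 1))) has_integral (exp ((-lam) * (X - 1)) - exp ((-lam) * (1 - 1))) / (-lam)) {1..X}"
    using assms by (intro exp_has_integral) auto
  hence "integral {1..X} (\<lambda>t. exp (- lam * (t - 1))) = (1 - exp (- lam * (X - 1))) / lam"
    by (simp add: integral_unique divide_simps)
  also have "\<dots> \<le> 1 / lam" using assms by (intro divide_right_mono) auto
  finally show ?thesis .
qed



lemma GammaLim:
  assumes "Re z > 0"
  shows "((\<lambda>R. integral {0..R} (\<lambda>t. of_real t powr (z-1) / of_real (exp t))) \<longlongrightarrow> Gamma z) at_top"
proof -
  define f where "f = (\<lambda>t::real. of_real t powr (z-1) / of_real (exp t) :: complex)"
  have ai: "f absolutely_integrable_on {0..}"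
  proof -
    have "f absolutely_integrable_on {0<..}" unfolding f_def by (rule absolutely_integrable_Gamma_integral'[OF assms])
    moreover have "f absolutely_integrable_on {0<..} \<longleftrightarrow> f absolutely_integrable_on {0..}"
      by (rule absolutely_integrable_spike_set_eq) (auto intro: negligible_subset[of "{0}"])
    ultimately show ?thesis by simp
  qed
  have lim: "((\<lambda>b. set_lebesgue_integral lebesgue {0..b} f) \<longlongrightarrow> set_lebesgue_integral lebesgue {0..} f) at_top"
    by (rule tendsto_set_lebesgue_integral_at_top) (use ai in auto)
  have eq1: "set_lebesgue_integral lebesgue {0..} f = Gamma z"
    using set_lebesgue_integral_eq_integral(2)[OF ai] Gamma_integral_complex[OF assms]
    by (simp add: f_def integral_unique)
  have eq2: "set_lebesgue_integral lebesgue {0..b} f = integral {0..b} f" for b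
    by (rule set_lebesgue_integral_eq_integral(2), rule set_integrable_subset[OF ai]) auto
  have "((\<lambda>R. integral {0..R} f) \<longlongrightarrow> Gamma z) at_top" using lim by (simp only: eq1 eq2)
  thus ?thesis by (simp add: f_def)
qed

lemma powr_of_real_mult:
  fixes a c :: complex
  assumes "r \<ge> 0" "a \<noteq> 0"
  shows "(of_real r * a) powr c = of_real r powr c * a powr c"
proof (cases "r = 0")
  case True thus ?thesis by simp
next
  case False
  hence r: "r > 0" using assms by simp
  have "Ln (of_real r * a) = of_real (ln r) + Ln a"
    using Ln_times_of_real[OF r assms(2)] r by (simp add: Ln_of_real)
  thus ?thesis using r assms by (simp add: powr_def exp_add[symmetric] algebra_simps Ln_of_real)
qed

lemma hull_pos:
  fixes R :: real and C :: complex
  assumes "R > 0" "Re C = R"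
  shows "convex hull {0, of_real R, C} \<subseteq> {z. Re z > 0} \<union> {0}"
proof
  fix z assume "z \<in> convex hull {0, of_real R, C}"
  then obtain u v w where uvw: "0 \<le> u" "0 \<le> v" "0 \<le> w" "u + v + w = 1"
    and z: "z = u *\<^sub>R 0 + v *\<^sub>R of_real R + w *\<^sub>R C"
    unfolding convex_hull_3 by blast
  have "Re z = (v + w) * R" using z assms by (simp add: algebra_simps)
  show "z \<in> {z. Re z > 0} \<union> {0}"
  proof (cases "v + w = 0")
    case True
    hence "v = 0" "w = 0" using uvw by auto
    thus ?thesis using z by simp
  next
    case False
    hence "v + w > 0" using uvw by auto
    thus ?thesis using \<open>Re z = (v + w) * R\<close> assms by simp
  qed
qed



lemma tri_zero:
  fixes a c :: complex and R :: real
  assumes a: "Re a > 0" and c: "Re c > 0" and R: "R > 0"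
  defines "C \<equiv> of_real (R / Re a) * a"
  defines "fL \<equiv> (\<lambda>z::complex. z powr c * exp (- z))"
  shows "contour_integral (linepath 0 (of_real R)) fL + (contour_integral (linepath (of_real R) C) fL
          + contour_integral (linepath C 0) fL) = 0"
proof -
  have ReC: "Re C = R" using a unfolding C_def by simp
  have H: "convex hull {0, of_real R, C} \<subseteq> {z. Re z > 0} \<union> {0}" by (rule hull_pos[OF R ReC])
  have cont: "continuous_on (convex hull {0, of_real R, C}) fL"
    unfolding fL_def
    apply (intro continuous_intros)
    using H c by auto
  have diff: "fL field_differentiable (at x)" if "x \<in> interior (convex hull {0, of_real R, C}) - {0}" for x
  proof -
    have "x \<in> convex hull {0, of_real R, C}" "x \<noteq> 0" using that interior_subset by auto
    hence "Re x > 0" using H by auto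
    hence nx: "x \<notin> \<real>\<^sub>\<le>\<^sub>0" by (auto simp: complex_nonpos_Reals_iff)
    have "fL analytic_on {x}" unfolding fL_def
      by (intro analytic_intros) (use nx in auto)
    thus ?thesis by (rule analytic_on_imp_differentiable_at) auto
  qed
  have tot: "(fL has_contour_integral 0) (linepath 0 (of_real R) +++ linepath (of_real R) C +++ linepath C 0)"
    by (rule Cauchy_theorem_triangle_cofinite[OF cont, of "{0}"]) (use diff in auto)
  have sub: "closed_segment p q \<subseteq> convex hull {0, of_real R, C}"
    if "p \<in> {0, of_real R, C}" "q \<in> {0, of_real R, C}" for p q
    unfolding segment_convex_hull by (rule hull_mono) (use that in auto)
  have i1: "fL contour_integrable_on linepath 0 (of_real R)"
    by (rule contour_integrable_continuous_linepath, rule continuous_on_subset[OF cont sub]) auto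
  have i2: "fL contour_integrable_on linepath (of_real R) C"
    by (rule contour_integrable_continuous_linepath, rule continuous_on_subset[OF cont sub]) auto
  have i3: "fL contour_integrable_on linepath C 0"
    by (rule contour_integrable_continuous_linepath, rule continuous_on_subset[OF cont sub]) auto
  have "(fL has_contour_integral (contour_integral (linepath 0 (of_real R)) fL + (contour_integral (linepath (of_real R) C) fL
          + contour_integral (linepath C 0) fL))) (linepath 0 (of_real R) +++ linepath (of_real R) C +++ linepath C 0)"
    by (intro has_contour_integral_join has_contour_integral_integral i1 i2 i3) auto
  thus ?thesis using tot has_contour_integral_unique by blast
qed

lemma Laplace:
  fixes a c :: complex
  assumes a: "Re a > 0" and c: "Re c > 0"
  shows "((\<lambda>X. (a powr c * a) * integral {0..X} (\<lambda>t. exp (- (a * of_real t)) * of_real t powr c))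
           \<longlongrightarrow> Gamma (c + 1)) at_top"
proof -
  define fL where "fL = (\<lambda>z::complex. z powr c * exp (- z))"
  define h where "h = (\<lambda>t::real. exp (- (a * of_real t)) * of_real t powr c)"
  define K where "K = norm a / Re a"
  have a0: "a \<noteq> 0" using a by auto
  have K: "K > 0" using a a0 unfolding K_def by (intro divide_pos_pos) auto
  define G where "G = (\<lambda>R. integral {0..R} (\<lambda>t. of_real t powr (c + 1 - 1) / of_real (exp t)))"
  define CC where "CC = (\<lambda>R::real. of_real (R / Re a) * a)"
  have key: "(a powr c * a) * integral {0..R / Re a} h = G R + contour_integral (linepath (of_real R) (CC R)) fL"
    if R: "R > 0" for R
  proof -
    define X where "X = R / Re a"
    have X: "X > 0" using R a unfolding X_def by simp
    have C: "CC R = of_real X * a" unfolding CC_def X_def by simp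
    have tz: "contour_integral (linepath 0 (of_real R)) fL + (contour_integral (linepath (of_real R) (CC R)) fL
          + contour_integral (linepath (CC R) 0) fL) = 0"
      unfolding fL_def CC_def by (rule tri_zero[OF a c R])
    have ci1: "contour_integral (linepath 0 (of_real R)) fL = G R"
    proof -
      have "contour_integral (linepath 0 (of_real R)) fL = integral {Re 0..Re (of_real R)} (\<lambda>x. fL (of_real x))"
        by (rule contour_integral_linepath_Reals_eq) (use R in auto)
      also have "\<dots> = G R" unfolding G_def fL_def
        by (simp add: exp_minus exp_of_real divide_inverse)
      finally show ?thesis .
    qed
    have contC: "continuous_on (closed_segment 0 (CC R)) fL"
    proof -
      have "closed_segment 0 (CC R) \<subseteq> {z. Re z > 0} \<union> {0}"
      proof
        fix z assume "z \<in> closed_segment 0 (CC R)"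
        then obtain u where u: "0 \<le> u" "u \<le> 1" and z: "z = (1 - u) *\<^sub>R 0 + u *\<^sub>R CC R"
          unfolding closed_segment_def by blast
        have "Re (CC R) = R" using a unfolding CC_def by simp
        hence "Re z = u * R" using z by simp
        thus "z \<in> {z. Re z > 0} \<union> {0}" using z u R by (cases "u = 0") auto
      qed
      thus ?thesis unfolding fL_def by (intro continuous_intros) (use c in auto)
    qed
    have ci3: "contour_integral (linepath (CC R) 0) fL = - contour_integral (linepath 0 (CC R)) fL"
      using contour_integral_reverse_linepath[OF contC] by simp
    have "(fL has_contour_integral contour_integral (linepath 0 (CC R)) fL) (linepath 0 (CC R))"
      by (rule has_contour_integral_integral, rule contour_integrable_continuous_linepath[OF contC])
    hence hi: "((\<lambda>u. fL (linepath 0 (CC R) u) * (CC R - 0)) has_integral contour_integral (linepath 0 (CC R)) fL) {0..1}"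
      by (simp add: has_contour_integral_linepath)
    have eqi: "fL (linepath 0 (CC R) u) * (CC R - 0) = (a powr c * a) * (of_real X * h (X * u))"
      if u: "u \<in> {0..1}" for u
    proof -
      have lp: "linepath 0 (CC R) u = of_real (u * X) * a" unfolding C linepath_def
        by (simp add: scaleR_conv_of_real)
      have "fL (linepath 0 (CC R) u) = of_real (u * X) powr c * a powr c * exp (- (a * of_real (X * u)))"
        unfolding lp fL_def using u X powr_of_real_mult[of "u * X" a c] a0 by (simp add: mult.commute)
      thus ?thesis unfolding C h_def by (simp add: mult.commute mult.left_commute)
    qed
    have "integral {0..1} (\<lambda>u. fL (linepath 0 (CC R) u) * (CC R - 0)) = contour_integral (linepath 0 (CC R)) fL"
      using hi by (rule integral_unique)
    hence "contour_integral (linepath 0 (CC R)) fL = integral {0..1} (\<lambda>u. (a powr c * a) * (of_real X * h (X * u)))"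
      using eqi by (metis (no_types, lifting) integral_cong)
    also have "\<dots> = (a powr c * a) * (of_real X * integral {0..1} (\<lambda>u. h (X * u)))"
      by simp
    also have "{0..1} = (\<lambda>x. x / X) ` {0..X}"
    proof -
      have "(\<lambda>x. x / X) ` {0..X} = {0/X..X/X}" using X by (subst image_divide_atLeastAtMost) auto
      thus ?thesis using X by simp
    qed
    also have "integral ((\<lambda>x. x / X) ` {0..X}) (\<lambda>u. h (X * u)) = (1 / \<bar>X\<bar>) *\<^sub>R integral {0..X} h"
      using X by (intro integral_stretch_real) auto
    finally have eqA: "contour_integral (linepath 0 (CC R)) fL = (a powr c * a) * (of_real X * ((1 / \<bar>X\<bar>) *\<^sub>R integral {0..X} h))" .
    have "of_real X * ((1 / \<bar>X\<bar>) *\<^sub>R integral {0..X} h) = integral {0..X} h"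
      using X by (simp add: scaleR_conv_of_real)
    with eqA have "contour_integral (linepath 0 (CC R)) fL = (a powr c * a) * integral {0..X} h"
      by metis
    with tz ci1 ci3 show ?thesis unfolding X_def by (simp add: algebra_simps)
  qed
  have bnd: "norm (contour_integral (linepath (of_real R) (CC R)) fL)
              \<le> (R * K) powr Re c * exp (\<bar>Im c\<bar> * pi) * exp (- R) * (2 * R * K)" if R: "R > 0" for R
  proof -
    have ReC: "Re (CC R) = R" using a unfolding CC_def by simp
    have nC: "norm (CC R) = R * K" using R a unfolding CC_def K_def
      by (simp add: norm_mult norm_divide del: of_real_divide)
    have RK: "R \<le> R * K"
      using complex_Re_le_cmod[of "CC R"] ReC nC by simp
    have contS: "continuous_on (closed_segment (of_real R) (CC R)) fL"
    proof -
      have "closed_segment (of_real R) (CC R) \<subseteq> {z. Re z > 0}"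
      proof
        fix z assume "z \<in> closed_segment (of_real R) (CC R)"
        then obtain u where u: "0 \<le> u" "u \<le> 1" and z: "z = (1 - u) *\<^sub>R of_real R + u *\<^sub>R CC R"
          unfolding closed_segment_def by blast
        have "Re z = (1 - u) * R + u * Re (CC R)" using z by simp
        hence "Re z = R" using ReC by (simp add: algebra_simps)
        thus "z \<in> {z. Re z > 0}" using R by simp
      qed
      thus ?thesis unfolding fL_def by (intro continuous_intros) auto
    qed
    have hc: "(fL has_contour_integral contour_integral (linepath (of_real R) (CC R)) fL) (linepath (of_real R) (CC R))"
      by (rule has_contour_integral_integral, rule contour_integrable_continuous_linepath[OF contS])
    have "norm (contour_integral (linepath (of_real R) (CC R)) fL)
           \<le> ((R * K) powr Re c * exp (\<bar>Im c\<bar> * pi) * exp (- R)) * norm (CC R - of_real R)"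
    proof (rule has_contour_integral_bound_linepath[OF hc])
      show "0 \<le> (R * K) powr Re c * exp (\<bar>Im c\<bar> * pi) * exp (- R)" by simp
      fix z assume "z \<in> closed_segment (of_real R) (CC R)"
      then obtain u where u: "0 \<le> u" "u \<le> 1" and z: "z = (1 - u) *\<^sub>R of_real R + u *\<^sub>R CC R"
        unfolding closed_segment_def by blast
      have "Re z = (1 - u) * R + u * Re (CC R)" using z by simp
      hence Rez: "Re z = R" using ReC by (simp add: algebra_simps)
      have "norm z \<le> (1 - u) * R + u * (R * K)"
        using z u R nC norm_triangle_ineq[of "(1 - u) *\<^sub>R of_real R" "u *\<^sub>R CC R"] by simp
      also have "\<dots> \<le> R * K"
      proof -
        have "(1 - u) * R \<le> (1 - u) * (R * K)" using u RK by (intro mult_left_mono) auto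
        thus ?thesis by (simp add: algebra_simps)
      qed
      finally have nz: "norm z \<le> R * K" .
      have "-Im c * Arg z \<le> \<bar>Im c\<bar> * pi"
      proof -
        have "\<bar>Arg z\<bar> \<le> pi" using Arg_bounded[of z] by auto
        hence "\<bar>Im c * Arg z\<bar> \<le> \<bar>Im c\<bar> * pi" by (simp add: abs_mult mult_left_mono)
        thus ?thesis by linarith
      qed
      have "norm (fL z) = norm z powr Re c * exp (- Im c * Arg z) * exp (- Re z)"
        unfolding fL_def by (simp add: norm_mult norm_powr_complex norm_exp_eq_Re)
      also have "\<dots> \<le> (R * K) powr Re c * exp (\<bar>Im c\<bar> * pi) * exp (- R)"
        unfolding Rez
        by (intro mult_mono powr_mono2 nz) (use c \<open>-Im c * Arg z \<le> \<bar>Im c\<bar> * pi\<close> in auto)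
      finally show "norm (fL z) \<le> (R * K) powr Re c * exp (\<bar>Im c\<bar> * pi) * exp (- R)" .
    qed
    also have "norm (CC R - of_real R) \<le> 2 * R * K"
    proof -
      have "norm (CC R - of_real R) \<le> R * K + R"
        using norm_triangle_ineq4[of "CC R" "of_real R"] nC R by simp
      moreover have "2 * R * K = R * K + R * K" by simp
      ultimately show ?thesis using RK by linarith
    qed
    hence "((R * K) powr Re c * exp (\<bar>Im c\<bar> * pi) * exp (- R)) * norm (CC R - of_real R)
            \<le> ((R * K) powr Re c * exp (\<bar>Im c\<bar> * pi) * exp (- R)) * (2 * R * K)"
      by (intro mult_left_mono) auto
    finally show ?thesis by simp
  qed
  have lim0: "((\<lambda>R. (R * K) powr Re c * exp (\<bar>Im c\<bar> * pi) * exp (- R) * (2 * R * K)) \<longlongrightarrow> 0) at_top"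
    using K by real_asymp
  have limci: "((\<lambda>R. contour_integral (linepath (of_real R) (CC R)) fL) \<longlongrightarrow> 0) at_top"
  proof (rule tendsto_norm_zero_cancel, rule Lim_null_comparison[OF _ lim0])
    show "\<forall>\<^sub>F R in at_top. norm (norm (contour_integral (linepath (of_real R) (CC R)) fL))
            \<le> (R * K) powr Re c * exp (\<bar>Im c\<bar> * pi) * exp (- R) * (2 * R * K)"
      using eventually_gt_at_top[of 0] by eventually_elim (use bnd in auto)
  qed
  have limG: "(G \<longlongrightarrow> Gamma (c + 1)) at_top"
    unfolding G_def by (rule GammaLim) (use c in simp)
  have lim1: "((\<lambda>R. (a powr c * a) * integral {0..R / Re a} h) \<longlongrightarrow> Gamma (c + 1)) at_top"
  proof (rule Lim_transform_eventually)
    show "((\<lambda>R. G R + contour_integral (linepath (of_real R) (CC R)) fL) \<longlongrightarrow> Gamma (c + 1)) at_top"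
      using tendsto_add[OF limG limci] by simp
    show "\<forall>\<^sub>F R in at_top. G R + contour_integral (linepath (of_real R) (CC R)) fL = (a powr c * a) * integral {0..R / Re a} h"
      using eventually_gt_at_top[of 0] by eventually_elim (use key in auto)
  qed
  have fl: "filterlim (\<lambda>X. Re a * X) at_top at_top"
    using a by real_asymp
  have "((\<lambda>X. (a powr c * a) * integral {0..(Re a * X) / Re a} h) \<longlongrightarrow> Gamma (c + 1)) at_top"
    using filterlim_compose[OF lim1 fl] by (simp add: o_def)
  thus ?thesis using a unfolding h_def by simp
qed



definition Fv :: "real \<Rightarrow> complex \<Rightarrow> complex \<Rightarrow> complex" where
  "Fv n w v = exp (of_real n * w) * exp (- (of_real n + v) * of_real (ln n))
     * exp (- (of_real n + v) * Ln w) * Gamma (of_real n + v + 1)"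

lemma T_fun_Fv: "T_fun n w v = Fv n w v - S_fun n w v"
  unfolding T_fun_def Fv_def by simp

lemma Fv_eq:
  assumes n: "n > 0" and w: "w \<noteq> 0"
  shows "Fv n w v = exp (of_real n * w) / (of_real n * w) powr (of_real n + v) * Gamma (of_real n + v + 1)"
proof -
  have Ln: "Ln (of_real n * w) = of_real (ln n) + Ln w"
    using Ln_times_of_real[OF n w] n by (simp add: Ln_of_real)
  have "(of_real n * w) powr (of_real n + v) = exp ((of_real n + v) * (of_real (ln n) + Ln w))"
    using n w by (simp add: powr_def Ln)
  thus ?thesis unfolding Fv_def
    by (simp add: exp_minus[symmetric] exp_add[symmetric] divide_inverse algebra_simps exp_minus)
qed

lemma Frep:
  assumes n: "n > 0" and w: "Re w > 0" and m: "n + Re v > 0"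
  shows "((\<lambda>X. of_real n * w * integral {0..X} (gI n w v)) \<longlongrightarrow> Fv n w v) at_top"
proof -
  define a where "a = of_real n * w"
  define c where "c = of_real n + v"
  have Rea: "Re a > 0" using n w unfolding a_def by simp
  have Rec: "Re c > 0" using m unfolding c_def by simp
  have a0: "a \<noteq> 0" using Rea by auto
  have w0: "w \<noteq> 0" using w by auto
  define hh where "hh = (\<lambda>t::real. exp (- (a * of_real t)) * of_real t powr c)"
  have L: "((\<lambda>X. (a powr c * a) * integral {0..X} hh) \<longlongrightarrow> Gamma (c + 1)) at_top"
    unfolding hh_def by (rule Laplace[OF Rea Rec])
  have gh: "gI n w v t = exp a * hh t" for t
  proof -
    have "exp (a * (1 - of_real t)) = exp a * exp (- (a * of_real t))"
      by (simp add: exp_add[symmetric] algebra_simps)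
    thus ?thesis unfolding gI_def hh_def a_def c_def by simp
  qed
  have pc0: "a powr c \<noteq> 0" using a0 by (simp add: powr_def)
  have eq: "of_real n * w * integral {0..X} (gI n w v) = (exp a / a powr c) * ((a powr c * a) * integral {0..X} hh)" for X
  proof -
    have "integral {0..X} (gI n w v) = exp a * integral {0..X} hh"
      unfolding gh by simp
    thus ?thesis using pc0 unfolding a_def by (simp add: field_simps)
  qed
  have "((\<lambda>X. of_real n * w * integral {0..X} (gI n w v)) \<longlongrightarrow> (exp a / a powr c) * Gamma (c + 1)) at_top"
    unfolding eq by (intro tendsto_mult_left L)
  moreover have "Fv n w v = (exp a / a powr c) * Gamma (c + 1)"
    using Fv_eq[OF n w0, of v] unfolding a_def c_def by (simp add: add.assoc)
  ultimately show ?thesis by simp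
qed

lemma Tlim:
  assumes n: "n > 0" and w: "Re w > 0" and m: "n + Re v > 0"
  shows "((\<lambda>X. of_real n * w * integral {1..X} (gI n w v)) \<longlongrightarrow> T_fun n w v + 1) at_top"
proof (rule Lim_transform_eventually)
  show "((\<lambda>X. of_real n * w * integral {0..X} (gI n w v) - of_real n * w * integral {0..1} (gI n w v))
          \<longlongrightarrow> T_fun n w v + 1) at_top"
    using tendsto_diff[OF Frep[OF assms] tendsto_const[of "of_real n * w * integral {0..1} (gI n w v)"]]
    unfolding T_fun_Fv S_fun_gI by (simp add: algebra_simps)
  show "\<forall>\<^sub>F X in at_top. of_real n * w * integral {0..X} (gI n w v) - of_real n * w * integral {0..1} (gI n w v)
          = of_real n * w * integral {1..X} (gI n w v)"
    using eventually_ge_at_top[of 1]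
  proof eventually_elim
    case (elim X)
    have "integral {0..1} (gI n w v) + integral {1..X} (gI n w v) = integral {0..X} (gI n w v)"
      by (rule Henstock_Kurzweil_Integration.integral_combine) (use elim int_gI[OF m] in auto)
    hence "integral {0..X} (gI n w v) = integral {0..1} (gI n w v) + integral {1..X} (gI n w v)" by simp
    thus ?case by (simp add: algebra_simps)
  qed
qed



lemma E1:
  assumes w: "Re w < 1"
  shows "\<forall>\<^sub>F n in at_top. norm (S_fun n w v) \<le> 1 + 2 * norm w / (1 - Re w)"
  using eventually_ge_at_top[of "max 1 (max (- Re v + 1) (-2 * Re v / (1 - Re w)))"]
proof eventually_elim
  case (elim n)
  have n: "n > 0" "n + Re v > 0" "n \<ge> -2 * Re v / (1 - Re w)" using elim by auto
  define lam where "lam = n * (1 - Re w) + Re v"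
  have lam2: "lam \<ge> n * (1 - Re w) / 2"
  proof -
    have "-2 * Re v \<le> n * (1 - Re w)" using n(3) w by (simp add: field_simps)
    thus ?thesis unfolding lam_def by simp
  qed
  have lam: "lam > 0" using lam2 n w by (smt (verit) divide_pos_pos mult_pos_pos)
  have "norm (integral {0..1} (gI n w v)) \<le> integral {0..1} (\<lambda>t. exp (- lam * (1 - t)))"
  proof (rule integral_norm_bound_integral)
    show "gI n w v integrable_on {0..1}" by (rule int_gI) (use n in auto)
    show "(\<lambda>t. exp (- lam * (1 - t))) integrable_on {0..1}"
      by (intro integrable_continuous_real continuous_intros)
    fix t :: real assume "t \<in> {0..1}"
    hence "norm (gI n w v t) \<le> exp ((n * Re w - (n + Re v)) * (1 - t))"
      using n by (intro bound1) auto
    also have "(n * Re w - (n + Re v)) * (1 - t) = - lam * (1 - t)" unfolding lam_def by (simp add: algebra_simps)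
    finally show "norm (gI n w v t) \<le> exp (- lam * (1 - t))" .
  qed
  also have "\<dots> \<le> 1 / lam" by (rule exp_int_le1[OF lam])
  finally have I: "norm (integral {0..1} (gI n w v)) \<le> 1 / lam" .
  have "norm (S_fun n w v) \<le> 1 + n * norm w * norm (integral {0..1} (gI n w v))"
    unfolding S_fun_gI using n norm_triangle_ineq[of 1 "of_real n * w * integral {0..1} (gI n w v)"]
    by (simp add: norm_mult)
  also have "\<dots> \<le> 1 + n * norm w * (1 / lam)"
    using I n by (intro add_left_mono mult_left_mono) auto
  also have "n * norm w * (1 / lam) \<le> n * norm w * (1 / (n * (1 - Re w) / 2))"
    using lam2 lam n w by (intro mult_left_mono divide_left_mono) (auto intro!: mult_pos_pos)
  also have "\<dots> = 2 * norm w / (1 - Re w)" using n w by (simp add: field_simps)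
  finally show ?case by simp
qed

lemma E2:
  assumes w: "Re w > 1"
  shows "\<forall>\<^sub>F n in at_top. norm (T_fun n w v) \<le> 1 + 2 * norm w / (Re w - 1)"
  using eventually_ge_at_top[of "max 1 (max (- Re v + 1) (2 * Re v / (Re w - 1)))"]
proof eventually_elim
  case (elim n)
  have n: "n > 0" "n + Re v > 0" "n \<ge> 2 * Re v / (Re w - 1)" using elim by auto
  define lam where "lam = n * (Re w - 1) - Re v"
  have lam2: "lam \<ge> n * (Re w - 1) / 2"
  proof -
    have "2 * Re v \<le> n * (Re w - 1)" using n(3) w by (simp add: field_simps)
    thus ?thesis unfolding lam_def by simp
  qed
  have lam: "lam > 0" using lam2 n w by (smt (verit) divide_pos_pos mult_pos_pos)
  define B where "B = 2 * norm w / (Re w - 1)"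
  have bX: "norm (of_real n * w * integral {1..X} (gI n w v)) \<le> B" if X: "X \<ge> 1" for X
  proof -
    have "norm (integral {1..X} (gI n w v)) \<le> integral {1..X} (\<lambda>t. exp (- lam * (t - 1)))"
    proof (rule integral_norm_bound_integral)
      show "gI n w v integrable_on {1..X}" by (rule int_gI) (use n in auto)
      show "(\<lambda>t. exp (- lam * (t - 1))) integrable_on {1..X}"
        by (intro integrable_continuous_real continuous_intros)
      fix t assume "t \<in> {1..X}"
      hence "norm (gI n w v t) \<le> exp ((n * Re w - (n + Re v)) * (1 - t))"
        using n by (intro bound1) auto
      also have "(n * Re w - (n + Re v)) * (1 - t) = - lam * (t - 1)" unfolding lam_def by (simp add: algebra_simps)
      finally show "norm (gI n w v t) \<le> exp (- lam * (t - 1))" .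
    qed
    also have "\<dots> \<le> 1 / lam" by (rule exp_int_le2[OF lam X])
    finally have I: "norm (integral {1..X} (gI n w v)) \<le> 1 / lam" .
    have "norm (of_real n * w * integral {1..X} (gI n w v)) = n * norm w * norm (integral {1..X} (gI n w v))"
      using n by (simp add: norm_mult)
    also have "\<dots> \<le> n * norm w * (1 / lam)"
      using I n by (intro mult_left_mono) auto
    also have "\<dots> \<le> n * norm w * (1 / (n * (Re w - 1) / 2))"
      using lam2 lam n w by (intro mult_left_mono divide_left_mono) (auto intro!: mult_pos_pos)
    also have "\<dots> = B" unfolding B_def using n w by (simp add: field_simps)
    finally show ?thesis .
  qed
  have "norm (T_fun n w v + 1) \<le> B"
  proof (rule tendsto_upperbound[OF tendsto_norm[OF Tlim]])
    show "0 < n" "0 < Re w" "0 < n + Re v" using n w by auto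
    show "\<forall>\<^sub>F X in at_top. norm (of_real n * w * integral {1..X} (gI n w v)) \<le> B"
      using eventually_ge_at_top[of 1] by eventually_elim (rule bX)
  qed simp
  hence "norm (T_fun n w v) \<le> B + 1" using norm_triangle_ineq4[of "T_fun n w v + 1" 1] by simp
  thus ?case unfolding B_def by simp
qed



lemma phi_neg:
  fixes s :: real assumes "s > 0" "s \<noteq> 1" shows "1 - s + ln s < 0"
proof -
  have "1 - (1 - s) < exp (- (1 - s))" using exp_minus_greater[of "1 - s"] assms by simp
  hence "s < exp (s - 1)" by simp
  hence "ln s < s - 1" using assms by (metis ln_less_cancel_iff exp_gt_zero ln_exp)
  thus ?thesis by simp
qed

lemma ln_ge_1_minus_inv:
  fixes x :: real assumes "x > 0" shows "ln x \<ge> 1 - 1 / x"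
proof -
  have "ln (1 / x) \<le> 1 / x - 1" using assms by (intro ln_le_minus_one) auto
  thus ?thesis using assms by (simp add: ln_div)
qed

lemma phi_head:
  fixes s t :: real assumes "0 < t" "t \<le> s" "s \<le> 1"
  shows "1 - t + ln t \<le> 1 - s + ln s"
proof -
  have s0: "s > 0" using assms by simp
  have "ln (s / t) \<ge> 1 - 1 / (s / t)" using assms by (intro ln_ge_1_minus_inv) auto
  hence "ln s - ln t \<ge> 1 - t / s" using assms s0 by (simp add: ln_div)
  moreover have "1 - t / s = (s - t) / s" using s0 by (simp add: field_simps)
  moreover have "(s - t) / s \<ge> s - t"
  proof -
    have "(s - t) * s \<le> (s - t) * 1" using assms by (intro mult_left_mono) auto
    thus ?thesis using s0 by (simp add: field_simps)
  qed
  ultimately show ?thesis by linarith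
qed

lemma phi_tail:
  fixes s t :: real assumes "0 < s" "s \<le> t"
  shows "1 - t + ln t \<le> (1 - s + ln s) - (t - s) * (1 - 1 / s)"
proof -
  have "ln (t / s) \<le> t / s - 1" using assms by (intro ln_le_minus_one) auto
  hence "ln t - ln s \<le> t / s - 1" using assms by (simp add: ln_div)
  moreover have "t / s - 1 = (t - s) / s" using assms by (simp add: field_simps)
  moreover have "(t - s) * (1 - 1 / s) = (t - s) - (t - s) / s" by (simp add: algebra_simps)
  ultimately show ?thesis by linarith
qed

lemma norm_gI1:
  assumes "Re w = 1" "t > 0"
  shows "norm (gI n w v t) = exp ((n + Re v) * (1 - t + ln t) + Re v * (t - 1))"
proof -
  have "norm (gI n w v t) = exp (n * (1 - t)) * t powr (n + Re v)"
    using norm_gI[of t n w v] assms by simp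
  also have "\<dots> = exp (n * (1 - t) + (n + Re v) * ln t)" using assms by (simp add: powr_def exp_add)
  also have "n * (1 - t) + (n + Re v) * ln t = (n + Re v) * (1 - t + ln t) + Re v * (t - 1)"
    by (simp add: algebra_simps)
  finally show ?thesis .
qed

lemma head_bound:
  assumes w: "Re w = 1" and t: "0 \<le> t" "t \<le> s" and s: "0 < s" "s \<le> 1" and m: "n + Re v \<ge> 0"
  shows "norm (gI n w v t) \<le> exp \<bar>Re v\<bar> * exp ((n + Re v) * (1 - s + ln s))"
proof (cases "t = 0")
  case True
  thus ?thesis by (simp add: gI_def)
next
  case False
  hence t0: "t > 0" using t by simp
  have "(n + Re v) * (1 - t + ln t) \<le> (n + Re v) * (1 - s + ln s)"
    using phi_head[OF t0 t(2) s(2)] m by (intro mult_left_mono) auto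
  moreover have "Re v * (t - 1) \<le> \<bar>Re v\<bar>"
  proof -
    have "\<bar>t - 1\<bar> \<le> 1" using t s by auto
    hence "\<bar>Re v * (t - 1)\<bar> \<le> \<bar>Re v\<bar>" by (simp add: abs_mult mult_left_le)
    thus ?thesis by linarith
  qed
  ultimately show ?thesis using norm_gI1[OF w t0, of n v] by (simp add: exp_add[symmetric] add.commute)
qed

lemma tail_bound:
  assumes w: "Re w = 1" and s: "0 < s" "s \<le> t" and m: "n + Re v \<ge> 0"
  shows "norm (gI n w v t) \<le> exp ((n + Re v) * (1 - s + ln s) + Re v * (s - 1))
             * exp (- ((n + Re v) * (1 - 1 / s) - Re v) * (t - s))"
proof -
  have t0: "t > 0" using s by simp
  have "(n + Re v) * (1 - t + ln t) \<le> (n + Re v) * ((1 - s + ln s) - (t - s) * (1 - 1 / s))"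
    using phi_tail[OF s] m by (intro mult_left_mono) auto
  moreover have "((n + Re v) * (1 - s + ln s) + Re v * (s - 1)) + (- ((n + Re v) * (1 - 1 / s) - Re v) * (t - s))
     = (n + Re v) * ((1 - s + ln s) - (t - s) * (1 - 1 / s)) + Re v * (t - 1)"
    by (simp add: algebra_simps add_divide_distrib[symmetric] diff_divide_distrib[symmetric])
  ultimately have "(n + Re v) * (1 - t + ln t) + Re v * (t - 1)
         \<le> ((n + Re v) * (1 - s + ln s) + Re v * (s - 1)) + (- ((n + Re v) * (1 - 1 / s) - Re v) * (t - s))"
    by linarith
  thus ?thesis using norm_gI1[OF w t0, of n v] by (simp add: exp_add[symmetric])
qed

lemma exp_int_le3:
  fixes lam :: real
  assumes "lam > 0" "s \<le> X"
  shows "integral {s..X} (\<lambda>t. exp (- lam * (t - s))) \<le> 1 / lam"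
proof -
  have "((\<lambda>t. exp ((-lam) * (t - s))) has_integral (exp ((-lam) * (X - s)) - exp ((-lam) * (s - s))) / (-lam)) {s..X}"
    using assms by (intro exp_has_integral) auto
  hence "integral {s..X} (\<lambda>t. exp (- lam * (t - s))) = (1 - exp (- lam * (X - s))) / lam"
    by (simp add: integral_unique divide_simps)
  also have "\<dots> \<le> 1 / lam" using assms by (intro divide_right_mono) auto
  finally show ?thesis .
qed

lemma Re_integral:
  fixes f :: "real \<Rightarrow> complex"
  assumes "f integrable_on S"
  shows "Re (integral S f) = integral S (\<lambda>x. Re (f x))"
  using integral_linear[OF assms bounded_linear_Re] by (simp add: o_def)

lemma Re_integral_ge:
  fixes f :: "real \<Rightarrow> complex"
  assumes "f integrable_on {a..b}" "a \<le> b" "\<And>t. t \<in> {a..b} \<Longrightarrow> Re (f t) \<ge> C"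
  shows "Re (integral {a..b} f) \<ge> (b - a) * C"
proof -
  have int: "(\<lambda>x. Re (f x)) integrable_on {a..b}"
    using integrable_linear[OF assms(1) bounded_linear_Re] by (simp add: o_def)
  have "integral {a..b} (\<lambda>x. C) \<le> integral {a..b} (\<lambda>x. Re (f x))"
    by (rule integral_le[OF _ int]) (use assms in auto)
  thus ?thesis using assms Re_integral[OF assms(1)] by simp
qed

lemma norm_integral_const:
  fixes f :: "real \<Rightarrow> complex"
  assumes "f integrable_on {a..b}" "a \<le> b" "\<And>t. t \<in> {a..b} \<Longrightarrow> norm (f t) \<le> C"
  shows "norm (integral {a..b} f) \<le> (b - a) * C"
proof -
  have "norm (integral {a..b} f) \<le> integral {a..b} (\<lambda>x. C)"
    by (rule integral_norm_bound_integral) (use assms in auto)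
  thus ?thesis using assms by simp
qed



lemma gI_exp:
  assumes "t > 0"
  shows "gI n w v t = exp (of_real n * w * (1 - of_real t) + (of_real n + v) * of_real (ln t))"
  using assms unfolding gI_def by (simp add: powr_def Ln_of_real exp_add)

lemma cos_ge_half:
  fixes x :: real assumes "\<bar>x\<bar> \<le> 1" shows "cos x \<ge> 1 / 2"
proof -
  have "pi / 3 \<ge> 1" using pi_gt3 by simp
  hence "cos (pi / 3) \<le> cos \<bar>x\<bar>" using assms by (intro cos_monotone_0_pi_le) auto
  thus ?thesis by (simp add: cos_60)
qed

lemma ln_near:
  fixes t :: real assumes "1/2 \<le> t" "t \<le> 3/2"
  shows "\<bar>ln t\<bar> \<le> 2 * \<bar>t - 1\<bar>" "1 - t + ln t \<ge> - 2 * (t - 1)^2"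
proof -
  have t0: "t > 0" using assms by simp
  have up: "ln t \<le> t - 1" using t0 by (rule ln_le_minus_one)
  have "\<bar>ln t\<bar> \<le> 2 * \<bar>t - 1\<bar> \<and> 1 - t + ln t \<ge> - 2 * (t - 1)^2"
  proof (cases "t \<le> 1")
    case True
    define x where "x = 1 - t"
    have x: "0 \<le> x" "x \<le> 1/2" using True assms unfolding x_def by auto
    have lo: "- x - 2 * x^2 \<le> ln (1 - x)" using ln_one_minus_pos_lower_bound[OF x] .
    have "1 - x = t" unfolding x_def by simp
    hence lo': "- x - 2 * x^2 \<le> ln t" using lo by simp
    have "(2 * x) * x \<le> 1 * x" using x by (intro mult_right_mono) auto
    hence x2: "2 * x^2 \<le> x" by (simp add: power2_eq_square)
    have a1: "\<bar>t - 1\<bar> = x" unfolding x_def using True by simp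
    have a2: "(t - 1)^2 = x^2" unfolding x_def by (simp add: power2_eq_square algebra_simps)
    have b1: "ln t \<le> 2 * x" using up x unfolding x_def by simp
    have b2: "- ln t \<le> 2 * x" using lo' x2 by simp
    have "\<bar>ln t\<bar> \<le> 2 * x" using b1 b2 by (simp add: abs_le_iff)
    moreover have "1 - t + ln t \<ge> - 2 * x^2" using lo' unfolding x_def by simp
    ultimately show ?thesis unfolding a1 a2 by simp
  next
    case False
    define x where "x = t - 1"
    have x: "0 \<le> x" "x \<le> 1" using False assms unfolding x_def by auto
    have lo: "x - x^2 \<le> ln (1 + x)" using ln_one_plus_pos_lower_bound[OF x] .
    have "1 + x = t" unfolding x_def by simp
    hence lo': "x - x^2 \<le> ln t" using lo by simp
    have "x * x \<le> 1 * x" using x by (intro mult_right_mono) auto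
    hence x2: "x^2 \<le> x" by (simp add: power2_eq_square)
    have a1: "\<bar>t - 1\<bar> = x" unfolding x_def using False by simp
    have a2: "(t - 1)^2 = x^2" unfolding x_def by simp
    have b1: "ln t \<le> 2 * x" using up x unfolding x_def by simp
    have b2: "- ln t \<le> 2 * x" using lo' x2 x by simp
    have c1: "\<bar>ln t\<bar> \<le> 2 * x" using b1 b2 by (simp add: abs_le_iff)
    have "0 \<le> x^2" by simp
    moreover have "1 - t = - x" unfolding x_def by simp
    ultimately have "1 - t + ln t \<ge> - 2 * x^2" using lo' by linarith
    with c1 show ?thesis unfolding a1 a2 by simp
  qed
  thus "\<bar>ln t\<bar> \<le> 2 * \<bar>t - 1\<bar>" "1 - t + ln t \<ge> - 2 * (t - 1)^2" by auto
qed

lemma near_lower: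
  assumes t: "1/2 \<le> t" "t \<le> 3/2" and tv: "2 * \<bar>Im v\<bar> * \<bar>t - 1\<bar> \<le> 1" and n: "n \<ge> 0"
  shows "Re (gI n 1 v t) \<ge> (1/2) * exp (- \<bar>Re v\<bar>) * exp (- 2 * n * (t - 1)^2)"
proof -
  have t0: "t > 0" using t by simp
  define L where "L = ln t"
  have L1: "\<bar>L\<bar> \<le> 2 * \<bar>t - 1\<bar>" and L2: "1 - t + L \<ge> - 2 * (t - 1)^2"
    using ln_near[OF t] unfolding L_def by auto
  have "t - 1 \<le> 1/2" "-(t - 1) \<le> 1/2" using t by linarith+
  hence "\<bar>t - 1\<bar> \<le> 1/2" by (simp only: abs_le_iff)
  hence L3: "\<bar>L\<bar> \<le> 1" by (intro order_trans[OF L1]) simp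
  define Z where "Z = of_real n * 1 * (1 - of_real t) + (of_real n + v) * of_real L"
  have g: "gI n 1 v t = exp Z" unfolding Z_def L_def by (rule gI_exp[OF t0])
  have ReZ: "Re Z = n * (1 - t + L) + Re v * L" unfolding Z_def by (simp add: algebra_simps)
  have ImZ: "Im Z = Im v * L" unfolding Z_def by simp
  have "n * (1 - t + L) \<ge> n * (- 2 * (t - 1)^2)" using L2 n by (intro mult_left_mono) auto
  moreover have "Re v * L \<ge> - \<bar>Re v\<bar>"
  proof -
    have "\<bar>Re v * L\<bar> \<le> \<bar>Re v\<bar>" using L3 by (simp add: abs_mult mult_left_le)
    thus ?thesis by linarith
  qed
  ultimately have ReZ2: "Re Z \<ge> - 2 * n * (t - 1)^2 - \<bar>Re v\<bar>" unfolding ReZ by simp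
  have "\<bar>Im Z\<bar> \<le> 1"
  proof -
    have "\<bar>Im Z\<bar> = \<bar>Im v\<bar> * \<bar>L\<bar>" unfolding ImZ by (simp add: abs_mult)
    also have "\<dots> \<le> \<bar>Im v\<bar> * (2 * \<bar>t - 1\<bar>)" using L1 by (intro mult_left_mono) auto
    finally show ?thesis using tv by simp
  qed
  hence cz: "cos (Im Z) \<ge> 1/2" by (rule cos_ge_half)
  have "Re (gI n 1 v t) = exp (Re Z) * cos (Im Z)" unfolding g by (simp add: Re_exp)
  also have "\<dots> \<ge> exp (- 2 * n * (t - 1)^2 - \<bar>Re v\<bar>) * (1/2)"
    using ReZ2 cz by (intro mult_mono) auto
  finally show ?thesis by (simp add: exp_diff exp_minus field_simps)
qed



lemma integral_split3:
  fixes f :: "real \<Rightarrow> complex"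
  assumes "f integrable_on {a..d}" "a \<le> b" "b \<le> c" "c \<le> d"
  shows "integral {a..d} f = integral {a..b} f + integral {b..c} f + integral {c..d} f"
proof -
  have i1: "f integrable_on {a..c}" by (rule integrable_subinterval_real[OF assms(1)]) (use assms in auto)
  have "integral {a..c} f = integral {a..b} f + integral {b..c} f"
    by (rule Henstock_Kurzweil_Integration.integral_combine[symmetric]) (use assms i1 in auto)
  moreover have "integral {a..d} f = integral {a..c} f + integral {c..d} f"
    by (rule Henstock_Kurzweil_Integration.integral_combine[symmetric]) (use assms in auto)
  ultimately show ?thesis by simp
qed

definition dl :: "complex \<Rightarrow> real" where "dl v = 1 / (2 * (\<bar>Im v\<bar> + 1))"

lemma dl_props: "0 < dl v" "dl v \<le> 1/2" "2 * \<bar>Im v\<bar> * dl v \<le> 1"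
  unfolding dl_def by (auto simp: field_simps)

lemma sqrt_small:
  assumes "n \<ge> 1 / d^2" "d > 0"
  shows "1 / sqrt n \<le> d" "0 < 1 / sqrt n" "n * (1 / sqrt n) = sqrt n" "(1 / sqrt n)^2 = 1 / n"
proof -
  have "1 / d^2 > 0" using assms by simp
  hence n0: "n > 0" using assms by linarith
  have "sqrt n \<ge> sqrt (1 / d^2)" using assms by (intro real_sqrt_le_mono) auto
  also have "sqrt (1 / d^2) = 1 / d" using assms by (simp add: real_sqrt_divide)
  finally have "sqrt n \<ge> 1 / d" .
  thus "1 / sqrt n \<le> d" using assms n0 by (simp add: field_simps)
  show "0 < 1 / sqrt n" using n0 by simp
  have "n * (1 / sqrt n) = n / sqrt n" by simp
  also have "\<dots> = sqrt n" using n0 by (intro real_div_sqrt) auto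
  finally show "n * (1 / sqrt n) = sqrt n" .
  show "(1 / sqrt n)^2 = 1 / n" using n0 by (simp add: power_divide)
qed

lemma S1_lower:
  "\<forall>\<^sub>F n in at_top. Re (S_fun n 1 v) \<ge> ((1/2) * exp (- \<bar>Re v\<bar>) * exp (-2)) * sqrt n - exp \<bar>Re v\<bar>"
proof -
  define d where "d = dl v"
  have d: "0 < d" "d \<le> 1/2" "2 * \<bar>Im v\<bar> * d \<le> 1" using dl_props[of v] unfolding d_def by auto
  define s1 where "s1 = 1 - d"
  define q where "q = 1 - s1 + ln s1"
  have q: "q < 0" unfolding q_def by (rule phi_neg) (use d s1_def in auto)
  define c0 where "c0 = (1/2) * exp (- \<bar>Re v\<bar>) * exp (-2::real)"
  have lim: "((\<lambda>n. n * exp ((n + Re v) * q)) \<longlongrightarrow> 0) at_top" using q by real_asymp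
  have ev2: "\<forall>\<^sub>F n in at_top. n * exp ((n + Re v) * q) \<le> 1"
    using order_tendstoD(2)[OF lim, of 1] by (auto elim: eventually_mono)
  show ?thesis
    using eventually_conj[OF eventually_ge_at_top[of "max 1 (max (1 - Re v) (1 / d^2))"] ev2]
  proof eventually_elim
    case (elim n)
    have n: "n \<ge> 1" "n + Re v \<ge> 1" "n \<ge> 1 / d^2" and ne: "n * exp ((n + Re v) * q) \<le> 1" using elim by auto
    define r where "r = 1 / sqrt n"
    have r: "r \<le> d" "0 < r" "n * r = sqrt n" "r^2 = 1 / n" using sqrt_small[OF n(3) d(1)] unfolding r_def by auto
    have m: "n + Re v > 0" using n by simp
    have int: "gI n 1 v integrable_on {0..1}" by (rule int_gI[OF m]) simp
    have ord: "0 \<le> s1" "s1 \<le> 1 - r" "1 - r \<le> 1" using r d unfolding s1_def by auto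
    have split: "integral {0..1} (gI n 1 v) = integral {0..s1} (gI n 1 v) + integral {s1..1-r} (gI n 1 v)
                    + integral {1-r..1} (gI n 1 v)"
      by (rule integral_split3[OF int ord])
    have intsub: "gI n 1 v integrable_on {a..b}" if "0 \<le> a" for a b by (rule int_gI[OF m that])
    have R1: "Re (integral {0..s1} (gI n 1 v)) \<ge> - (exp \<bar>Re v\<bar> * exp ((n + Re v) * q))"
    proof -
      have "norm (integral {0..s1} (gI n 1 v)) \<le> (s1 - 0) * (exp \<bar>Re v\<bar> * exp ((n + Re v) * q))"
      proof (rule norm_integral_const[OF intsub])
        fix t assume t: "t \<in> {0..s1}"
        show "norm (gI n 1 v t) \<le> exp \<bar>Re v\<bar> * exp ((n + Re v) * q)"
          unfolding q_def using head_bound[of 1 t s1 n v] t ord d m by (auto simp: s1_def)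
      qed (use ord in auto)
      also have "\<dots> \<le> 1 * (exp \<bar>Re v\<bar> * exp ((n + Re v) * q))"
        using ord d by (intro mult_right_mono) (auto simp: s1_def)
      finally have "norm (integral {0..s1} (gI n 1 v)) \<le> exp \<bar>Re v\<bar> * exp ((n + Re v) * q)" by simp
      moreover have "- norm (integral {0..s1} (gI n 1 v)) \<le> Re (integral {0..s1} (gI n 1 v))"
        using abs_Re_le_cmod[of "integral {0..s1} (gI n 1 v)"] by linarith
      ultimately show ?thesis by linarith
    qed
    have R2: "Re (integral {s1..1-r} (gI n 1 v)) \<ge> (1 - r - s1) * 0"
    proof (rule Re_integral_ge[OF intsub])
      fix t assume t: "t \<in> {s1..1-r}"
      have tt: "1/2 \<le> t" "t \<le> 3/2" using t d ord unfolding s1_def by auto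
      have "\<bar>t - 1\<bar> \<le> d" using t r unfolding s1_def by auto
      hence "2 * \<bar>Im v\<bar> * \<bar>t - 1\<bar> \<le> 2 * \<bar>Im v\<bar> * d" by (intro mult_left_mono) auto
      hence tv: "2 * \<bar>Im v\<bar> * \<bar>t - 1\<bar> \<le> 1" using d by linarith
      have "0 \<le> (1/2) * exp (- \<bar>Re v\<bar>) * exp (- 2 * n * (t - 1)^2)" by simp
      also have "\<dots> \<le> Re (gI n 1 v t)" by (rule near_lower[OF tt tv]) (use n in auto)
      finally show "0 \<le> Re (gI n 1 v t)" .
    qed (use ord in auto)
    have R3: "Re (integral {1-r..1} (gI n 1 v)) \<ge> (1 - (1 - r)) * c0"
    proof (rule Re_integral_ge[OF intsub])
      fix t assume t: "t \<in> {1-r..1}"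
      have tt: "1/2 \<le> t" "t \<le> 3/2" using t d r by auto
      have a: "\<bar>t - 1\<bar> \<le> r" using t by auto
      hence "2 * \<bar>Im v\<bar> * \<bar>t - 1\<bar> \<le> 2 * \<bar>Im v\<bar> * d" using r by (intro mult_left_mono) auto
      hence tv: "2 * \<bar>Im v\<bar> * \<bar>t - 1\<bar> \<le> 1" using d by linarith
      have "\<bar>t - 1\<bar>^2 \<le> r^2" using a by (intro power_mono) auto
      hence "(t - 1)^2 \<le> r^2" by simp
      hence "n * (t - 1)^2 \<le> n * (1 / n)" using r n by (intro mult_left_mono) auto
      hence "n * (t - 1)^2 \<le> 1" using n by simp
      hence "exp (-2::real) \<le> exp (- 2 * n * (t - 1)^2)" by simp
      hence "c0 \<le> (1/2) * exp (- \<bar>Re v\<bar>) * exp (- 2 * n * (t - 1)^2)" unfolding c0_def by simp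
      also have "\<dots> \<le> Re (gI n 1 v t)" by (rule near_lower[OF tt tv]) (use n in auto)
      finally show "c0 \<le> Re (gI n 1 v t)" .
    qed (use ord in auto)
    have ReI: "Re (integral {0..1} (gI n 1 v)) \<ge> - (exp \<bar>Re v\<bar> * exp ((n + Re v) * q)) + r * c0"
      using R1 R2 R3 unfolding split by simp
    have "Re (S_fun n 1 v) = 1 + n * Re (integral {0..1} (gI n 1 v))"
      unfolding S_fun_gI by simp
    also have "\<dots> \<ge> 1 + n * (- (exp \<bar>Re v\<bar> * exp ((n + Re v) * q)) + r * c0)"
      using ReI n by (intro add_left_mono mult_left_mono) auto
    finally have f1: "Re (S_fun n 1 v) \<ge> 1 - exp \<bar>Re v\<bar> * (n * exp ((n + Re v) * q)) + (n * r) * c0"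
      by (simp add: algebra_simps)
    have f2: "exp \<bar>Re v\<bar> * (n * exp ((n + Re v) * q)) \<le> exp \<bar>Re v\<bar> * 1"
      using ne by (intro mult_left_mono) auto
    have f3: "(n * r) * c0 = sqrt n * c0" using r(3) by simp
    from f1 f2 f3 have "Re (S_fun n 1 v) \<ge> 1 - exp \<bar>Re v\<bar> + sqrt n * c0" by linarith
    thus ?case unfolding c0_def by (simp add: algebra_simps)
  qed
qed



lemma tail_int:
  assumes w: "Re w = 1" and m: "n + Re v > 0" and s: "1 < s" "s \<le> X"
    and mu: "(n + Re v) * (1 - 1 / s) - Re v \<ge> 1"
  shows "norm (integral {s..X} (gI n w v)) \<le> exp ((n + Re v) * (1 - s + ln s) + Re v * (s - 1))"
proof -
  define A where "A = (n + Re v) * (1 - s + ln s) + Re v * (s - 1)"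
  define mu where "mu = (n + Re v) * (1 - 1 / s) - Re v"
  have mu0: "mu > 0" using mu unfolding mu_def by simp
  have "norm (integral {s..X} (gI n w v)) \<le> integral {s..X} (\<lambda>t. exp A * exp (- mu * (t - s)))"
  proof (rule integral_norm_bound_integral)
    show "gI n w v integrable_on {s..X}" by (rule int_gI[OF m]) (use s in auto)
    show "(\<lambda>t. exp A * exp (- mu * (t - s))) integrable_on {s..X}"
      by (intro integrable_continuous_real continuous_intros)
    fix t assume t: "t \<in> {s..X}"
    show "norm (gI n w v t) \<le> exp A * exp (- mu * (t - s))"
      unfolding A_def mu_def using tail_bound[OF w, of s t n v] t s m by auto
  qed
  also have "\<dots> = exp A * integral {s..X} (\<lambda>t. exp (- mu * (t - s)))" by simp
  also have "\<dots> \<le> exp A * (1 / mu)" by (intro mult_left_mono exp_int_le3 mu0) (use s in auto)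
  also have "\<dots> \<le> exp A * 1" using mu unfolding mu_def by (intro mult_left_mono) (auto simp: field_simps)
  finally show ?thesis unfolding A_def by simp
qed

lemma T1_lower:
  "\<forall>\<^sub>F n in at_top. Re (T_fun n 1 v) \<ge> ((1/2) * exp (- \<bar>Re v\<bar>) * exp (-2)) * sqrt n - 2"
proof -
  define d where "d = dl v"
  have d: "0 < d" "d \<le> 1/2" "2 * \<bar>Im v\<bar> * d \<le> 1" using dl_props[of v] unfolding d_def by auto
  define s2 where "s2 = 1 + d"
  define q where "q = 1 - s2 + ln s2"
  have q: "q < 0" unfolding q_def by (rule phi_neg) (use d s2_def in auto)
  define p where "p = 1 - 1 / s2"
  have p: "p > 0" unfolding p_def s2_def using d by (simp add: field_simps)
  define c0 where "c0 = (1/2) * exp (- \<bar>Re v\<bar>) * exp (-2::real)"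
  have lim: "((\<lambda>n. n * exp ((n + Re v) * q + Re v * d)) \<longlongrightarrow> 0) at_top" using q by real_asymp
  have ev2: "\<forall>\<^sub>F n in at_top. n * exp ((n + Re v) * q + Re v * d) \<le> 1"
    using order_tendstoD(2)[OF lim, of 1] by (auto elim: eventually_mono)
  have ev3: "\<forall>\<^sub>F n in at_top. (n + Re v) * p - Re v \<ge> 1"
  proof -
    have "filterlim (\<lambda>n. (n + Re v) * p - Re v) at_top at_top" using p by real_asymp
    thus ?thesis by (simp add: filterlim_at_top)
  qed
  show ?thesis
    using eventually_conj[OF eventually_ge_at_top[of "max 1 (max (1 - Re v) (1 / d^2))"] eventually_conj[OF ev2 ev3]]
  proof eventually_elim
    case (elim n)
    have n: "n \<ge> 1" "n + Re v \<ge> 1" "n \<ge> 1 / d^2" and ne: "n * exp ((n + Re v) * q + Re v * d) \<le> 1"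
      and mu: "(n + Re v) * p - Re v \<ge> 1" using elim by auto
    define r where "r = 1 / sqrt n"
    have r: "r \<le> d" "0 < r" "n * r = sqrt n" "r^2 = 1 / n" using sqrt_small[OF n(3) d(1)] unfolding r_def by auto
    have m: "n + Re v > 0" using n by simp
    have intsub: "gI n 1 v integrable_on {a..b}" if "0 \<le> a" for a b by (rule int_gI[OF m that])
    have bX: "Re (of_real n * 1 * integral {1..X} (gI n 1 v)) \<ge> sqrt n * c0 - 1" if X: "X \<ge> s2" for X
    proof -
      have ord: "1 \<le> 1 + r" "1 + r \<le> s2" "s2 \<le> X" using r d X unfolding s2_def by auto
      have split: "integral {1..X} (gI n 1 v) = integral {1..1+r} (gI n 1 v) + integral {1+r..s2} (gI n 1 v)
                    + integral {s2..X} (gI n 1 v)"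
        by (rule integral_split3[OF intsub ord]) simp
      have R1: "Re (integral {1..1+r} (gI n 1 v)) \<ge> ((1 + r) - 1) * c0"
      proof (rule Re_integral_ge[OF intsub])
        fix t assume t: "t \<in> {1..1+r}"
        have tt: "1/2 \<le> t" "t \<le> 3/2" using t d r by auto
        have a: "\<bar>t - 1\<bar> \<le> r" using t by auto
        hence "2 * \<bar>Im v\<bar> * \<bar>t - 1\<bar> \<le> 2 * \<bar>Im v\<bar> * d" using r by (intro mult_left_mono) auto
        hence tv: "2 * \<bar>Im v\<bar> * \<bar>t - 1\<bar> \<le> 1" using d by linarith
        have "\<bar>t - 1\<bar>^2 \<le> r^2" using a by (intro power_mono) auto
        hence "(t - 1)^2 \<le> r^2" by simp
        hence "n * (t - 1)^2 \<le> n * (1 / n)" using r n by (intro mult_left_mono) auto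
        hence "n * (t - 1)^2 \<le> 1" using n by simp
        hence "exp (-2::real) \<le> exp (- 2 * n * (t - 1)^2)" by simp
        hence "c0 \<le> (1/2) * exp (- \<bar>Re v\<bar>) * exp (- 2 * n * (t - 1)^2)" unfolding c0_def by simp
        also have "\<dots> \<le> Re (gI n 1 v t)" by (rule near_lower[OF tt tv]) (use n in auto)
        finally show "c0 \<le> Re (gI n 1 v t)" .
      qed (use ord in auto)
      have R2: "Re (integral {1+r..s2} (gI n 1 v)) \<ge> (s2 - (1 + r)) * 0"
      proof (rule Re_integral_ge[OF intsub])
        fix t assume t: "t \<in> {1+r..s2}"
        have tt: "1/2 \<le> t" "t \<le> 3/2" using t d r unfolding s2_def by auto
        have "\<bar>t - 1\<bar> \<le> d" using t r unfolding s2_def by auto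
        hence "2 * \<bar>Im v\<bar> * \<bar>t - 1\<bar> \<le> 2 * \<bar>Im v\<bar> * d" by (intro mult_left_mono) auto
        hence tv: "2 * \<bar>Im v\<bar> * \<bar>t - 1\<bar> \<le> 1" using d by linarith
        have "0 \<le> (1/2) * exp (- \<bar>Re v\<bar>) * exp (- 2 * n * (t - 1)^2)" by simp
        also have "\<dots> \<le> Re (gI n 1 v t)" by (rule near_lower[OF tt tv]) (use n in auto)
        finally show "0 \<le> Re (gI n 1 v t)" .
      qed (use ord r in auto)
      have R3: "Re (integral {s2..X} (gI n 1 v)) \<ge> - exp ((n + Re v) * q + Re v * d)"
      proof -
        have "norm (integral {s2..X} (gI n 1 v)) \<le> exp ((n + Re v) * (1 - s2 + ln s2) + Re v * (s2 - 1))"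
          by (rule tail_int) (use m ord d mu in \<open>auto simp: s2_def p_def\<close>)
        hence "norm (integral {s2..X} (gI n 1 v)) \<le> exp ((n + Re v) * q + Re v * d)"
          unfolding q_def s2_def by simp
        moreover have "- norm (integral {s2..X} (gI n 1 v)) \<le> Re (integral {s2..X} (gI n 1 v))"
          using abs_Re_le_cmod[of "integral {s2..X} (gI n 1 v)"] by linarith
        ultimately show ?thesis by linarith
      qed
      have ReJ: "Re (integral {1..X} (gI n 1 v)) \<ge> r * c0 - exp ((n + Re v) * q + Re v * d)"
        using R1 R2 R3 unfolding split by simp
      have "Re (of_real n * 1 * integral {1..X} (gI n 1 v)) = n * Re (integral {1..X} (gI n 1 v))" by simp
      also have "\<dots> \<ge> n * (r * c0 - exp ((n + Re v) * q + Re v * d))"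
        using ReJ n by (intro mult_left_mono) auto
      finally have f1: "Re (of_real n * 1 * integral {1..X} (gI n 1 v)) \<ge> (n * r) * c0 - n * exp ((n + Re v) * q + Re v * d)"
        by (simp add: algebra_simps)
      have f3: "(n * r) * c0 = sqrt n * c0" using r(3) by simp
      from f1 f3 ne show ?thesis by linarith
    qed
    have "Re (T_fun n 1 v + 1) \<ge> sqrt n * c0 - 1"
    proof (rule tendsto_lowerbound[OF tendsto_Re[OF Tlim]])
      show "0 < n" "0 < Re (1::complex)" "0 < n + Re v" using n m by auto
      show "\<forall>\<^sub>F X in at_top. sqrt n * c0 - 1 \<le> Re (of_real n * 1 * integral {1..X} (gI n 1 v))"
        using eventually_ge_at_top[of s2] by eventually_elim (rule bX)
    qed simp
    thus ?case unfolding c0_def by (simp add: algebra_simps)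
  qed
qed

lemma F1_upper:
  "\<forall>\<^sub>F n in at_top. norm (Fv n 1 v) \<le> 2 * n * exp \<bar>Re v\<bar> + 1"
proof -
  define d where "d = dl v"
  have d: "0 < d" "d \<le> 1/2" using dl_props[of v] unfolding d_def by auto
  define s2 where "s2 = 1 + d"
  define q where "q = 1 - s2 + ln s2"
  have q: "q < 0" unfolding q_def by (rule phi_neg) (use d s2_def in auto)
  define p where "p = 1 - 1 / s2"
  have p: "p > 0" unfolding p_def s2_def using d by (simp add: field_simps)
  have lim: "((\<lambda>n. n * exp ((n + Re v) * q + Re v * d)) \<longlongrightarrow> 0) at_top" using q by real_asymp
  have ev2: "\<forall>\<^sub>F n in at_top. n * exp ((n + Re v) * q + Re v * d) \<le> 1"
    using order_tendstoD(2)[OF lim, of 1] by (auto elim: eventually_mono)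
  have ev3: "\<forall>\<^sub>F n in at_top. (n + Re v) * p - Re v \<ge> 1"
  proof -
    have "filterlim (\<lambda>n. (n + Re v) * p - Re v) at_top at_top" using p by real_asymp
    thus ?thesis by (simp add: filterlim_at_top)
  qed
  show ?thesis
    using eventually_conj[OF eventually_ge_at_top[of "max 1 (1 - Re v)"] eventually_conj[OF ev2 ev3]]
  proof eventually_elim
    case (elim n)
    have n: "n \<ge> 1" "n + Re v \<ge> 1" and ne: "n * exp ((n + Re v) * q + Re v * d) \<le> 1"
      and mu: "(n + Re v) * p - Re v \<ge> 1" using elim by auto
    have m: "n + Re v > 0" using n by simp
    have intsub: "gI n 1 v integrable_on {a..b}" if "0 \<le> a" for a b by (rule int_gI[OF m that])
    have bX: "norm (of_real n * 1 * integral {0..X} (gI n 1 v)) \<le> 2 * n * exp \<bar>Re v\<bar> + 1" if X: "X \<ge> s2" for X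
    proof -
      have ord: "0 \<le> s2" "s2 \<le> X" using d X unfolding s2_def by auto
      have split: "integral {0..X} (gI n 1 v) = integral {0..s2} (gI n 1 v) + integral {s2..X} (gI n 1 v)"
        by (rule Henstock_Kurzweil_Integration.integral_combine[symmetric]) (use ord intsub in auto)
      have N1: "norm (integral {0..s2} (gI n 1 v)) \<le> (s2 - 0) * exp \<bar>Re v\<bar>"
      proof (rule norm_integral_const[OF intsub])
        fix t assume t: "t \<in> {0..s2}"
        have "norm (gI n 1 v t) \<le> exp ((n * Re 1 - (n + Re v)) * (1 - t))"
          by (rule bound1) (use t m in auto)
        also have "(n * Re 1 - (n + Re v)) * (1 - t) = - (Re v * (1 - t))" by (simp add: algebra_simps)
        also have "- (Re v * (1 - t)) \<le> \<bar>Re v\<bar>"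
        proof -
          have "\<bar>1 - t\<bar> \<le> 1" using t d unfolding s2_def by auto
          hence "\<bar>Re v * (1 - t)\<bar> \<le> \<bar>Re v\<bar>" by (simp add: abs_mult mult_left_le)
          thus ?thesis by linarith
        qed
        finally show "norm (gI n 1 v t) \<le> exp \<bar>Re v\<bar>" by simp
      qed (use ord in auto)
      have N2: "norm (integral {s2..X} (gI n 1 v)) \<le> exp ((n + Re v) * q + Re v * d)"
      proof -
        have "norm (integral {s2..X} (gI n 1 v)) \<le> exp ((n + Re v) * (1 - s2 + ln s2) + Re v * (s2 - 1))"
          by (rule tail_int) (use m ord d mu in \<open>auto simp: s2_def p_def\<close>)
        thus ?thesis unfolding q_def s2_def by simp
      qed
      have "norm (of_real n * 1 * integral {0..X} (gI n 1 v)) \<le> n * (norm (integral {0..s2} (gI n 1 v)) + norm (integral {s2..X} (gI n 1 v)))"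
        unfolding split using n norm_triangle_ineq[of "integral {0..s2} (gI n 1 v)" "integral {s2..X} (gI n 1 v)"]
        by (simp add: norm_mult mult_left_mono)
      also have "\<dots> \<le> n * (s2 * exp \<bar>Re v\<bar> + exp ((n + Re v) * q + Re v * d))"
        using N1 N2 n by (intro mult_left_mono add_mono) auto
      also have "\<dots> = s2 * (n * exp \<bar>Re v\<bar>) + n * exp ((n + Re v) * q + Re v * d)" by (simp add: algebra_simps)
      also have "\<dots> \<le> 2 * (n * exp \<bar>Re v\<bar>) + 1"
        using ne d n by (intro add_mono mult_right_mono) (auto simp: s2_def)
      finally show ?thesis by simp
    qed
    show "norm (Fv n 1 v) \<le> 2 * n * exp \<bar>Re v\<bar> + 1"
    proof (rule tendsto_upperbound[OF tendsto_norm[OF Frep]])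
      show "0 < n" "0 < Re (1::complex)" "0 < n + Re v" using n m by auto
      show "\<forall>\<^sub>F X in at_top. norm (of_real n * 1 * integral {0..X} (gI n 1 v)) \<le> 2 * n * exp \<bar>Re v\<bar> + 1"
        using eventually_ge_at_top[of s2] by eventually_elim (rule bX)
    qed simp
  qed
qed



lemma derivP:
  fixes a c z0 :: complex
  assumes z0: "z0 \<notin> \<real>\<^sub>\<le>\<^sub>0" and D: "c - a * z0 \<noteq> 0"
  shows "((\<lambda>z. exp (a * (1 - z)) * z powr c * z / (c - a * z)) has_field_derivative
           (exp (a * (1 - z0)) * z0 powr c * (1 + c / (c - a * z0)^2))) (at z0)"
proof -
  have z00: "z0 \<noteq> 0" using z0 by auto
  have Zm: "z0 powr (c - 1) * z0 = z0 powr c"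
    using z00 by (simp add: powr_diff powr_one)
  have d1: "((\<lambda>z. exp (a * (1 - z))) has_field_derivative (exp (a * (1 - z0)) * (- a))) (at z0)"
    by (auto intro!: derivative_eq_intros)
  have d2: "((\<lambda>z. z powr c) has_field_derivative (c * z0 powr (c - 1))) (at z0)"
    by (rule has_field_derivative_powr[OF z0])
  have d3: "((\<lambda>z. z / (c - a * z)) has_field_derivative (c / (c - a * z0)^2)) (at z0)"
  proof -
    have "((\<lambda>z. z / (c - a * z)) has_field_derivative ((1 * (c - a * z0) - z0 * (0 - a * 1)) / (c - a * z0)^2)) (at z0)"
      using DERIV_divide[OF DERIV_ident DERIV_diff[OF DERIV_const DERIV_cmult[OF DERIV_ident]] D]
      by (simp add: power2_eq_square)
    thus ?thesis by (simp add: algebra_simps)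
  qed
  have "((\<lambda>z. exp (a * (1 - z)) * z powr c * (z / (c - a * z))) has_field_derivative
      ((exp (a * (1 - z0)) * (- a) * z0 powr c + exp (a * (1 - z0)) * (c * z0 powr (c - 1))) * (z0 / (c - a * z0))
       + exp (a * (1 - z0)) * z0 powr c * (c / (c - a * z0)^2))) (at z0)"
    using DERIV_mult[OF DERIV_mult[OF d1 d2] d3] by (simp add: algebra_simps)
  moreover have "(exp (a * (1 - z0)) * (- a) * z0 powr c + exp (a * (1 - z0)) * (c * z0 powr (c - 1))) * (z0 / (c - a * z0))
       + exp (a * (1 - z0)) * z0 powr c * (c / (c - a * z0)^2)
      = exp (a * (1 - z0)) * z0 powr c * (1 + c / (c - a * z0)^2)"
  proof -
    have "(exp (a * (1 - z0)) * (- a) * z0 powr c + exp (a * (1 - z0)) * (c * z0 powr (c - 1))) * (z0 / (c - a * z0))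
        = exp (a * (1 - z0)) * z0 powr c * ((- a * z0 + c) / (c - a * z0))"
      using Zm by (simp add: field_simps)
    also have "(- a * z0 + c) / (c - a * z0) = 1" using D by (simp add: field_simps)
    finally show ?thesis by (simp add: algebra_simps)
  qed
  ultimately show ?thesis by (simp add: mult.assoc)
qed

lemma gI_le_expk:
  assumes w: "Re w = 1" and t: "0 \<le> t" "t \<le> 2" and m: "n + Re v \<ge> 0"
  shows "norm (gI n w v t) \<le> exp \<bar>Re v\<bar>"
proof -
  have "norm (gI n w v t) \<le> exp ((n * Re w - (n + Re v)) * (1 - t))"
    by (rule bound1) (use t m in auto)
  also have "(n * Re w - (n + Re v)) * (1 - t) = - (Re v * (1 - t))" using w by (simp add: algebra_simps)
  also have "- (Re v * (1 - t)) \<le> \<bar>Re v\<bar>"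
  proof -
    have "\<bar>1 - t\<bar> \<le> 1" using t by auto
    hence "\<bar>Re v * (1 - t)\<bar> \<le> \<bar>Re v\<bar>" by (simp add: abs_mult mult_left_le)
    thus ?thesis by linarith
  qed
  finally show ?thesis by simp
qed

lemma E3:
  assumes w: "Re w = 1" "w \<noteq> 1"
  shows "\<exists>B. \<forall>\<^sub>F n in at_top. norm (S_fun n w v) \<le> B"
proof -
  define b where "b = \<bar>Im w\<bar>"
  have b: "b > 0" using w unfolding b_def by (auto simp: complex_eq_iff)
  define q where "q = 1 - (1/2::real) + ln (1/2)"
  have q: "q < 0" unfolding q_def by (rule phi_neg) auto
  define K where "K = exp \<bar>Re v\<bar>"
  have K: "K > 0" unfolding K_def by simp
  define B where "B = 1 + norm w * K * (1 + 8 / b + 16 / b^2)"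
  have lim: "((\<lambda>n. n * exp ((n + Re v) * q)) \<longlongrightarrow> 0) at_top" using q by real_asymp
  have ev2: "\<forall>\<^sub>F n in at_top. n * exp ((n + Re v) * q) \<le> 1"
    using order_tendstoD(2)[OF lim, of 1] by (auto elim: eventually_mono)
  have "\<forall>\<^sub>F n in at_top. norm (S_fun n w v) \<le> B"
    using eventually_conj[OF eventually_ge_at_top[of "max 1 (max (1 - Re v) (max (4 * \<bar>Im v\<bar> / b) (norm v)))"] ev2]
  proof eventually_elim
    case (elim n)
    have n: "n \<ge> 1" "n + Re v \<ge> 1" "n \<ge> 4 * \<bar>Im v\<bar> / b" "n \<ge> norm v"
      and ne: "n * exp ((n + Re v) * q) \<le> 1" using elim by auto
    have m: "n + Re v > 0" using n by simp
    have nb: "\<bar>Im v\<bar> \<le> n * b / 4" using n(3) b by (simp add: field_simps)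
    define a where "a = of_real n * w"
    define c where "c = of_real n + v"
    define L where "L = n * b / 4"
    have L: "L > 0" unfolding L_def using n b by simp
    define D where "D = (\<lambda>t::real. c - a * of_real t)"
    have Dlow: "norm (D t) \<ge> L" if t: "t \<in> {1/2..1}" for t
    proof -
      have ImD: "Im (D t) = Im v - n * t * Im w" unfolding D_def a_def c_def by simp
      have "\<bar>n * t * Im w\<bar> = n * t * b" using t n unfolding b_def by (simp add: abs_mult)
      also have "n * t * b \<ge> n * (1/2) * b" using t n b by (intro mult_right_mono mult_left_mono) auto
      finally have "\<bar>n * t * Im w\<bar> \<ge> n * b / 2" by simp
      hence "\<bar>Im (D t)\<bar> \<ge> n * b / 2 - \<bar>Im v\<bar>" unfolding ImD by linarith
      hence "\<bar>Im (D t)\<bar> \<ge> L" using nb unfolding L_def by linarith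
      thus ?thesis using abs_Im_le_cmod[of "D t"] by linarith
    qed
    have D0: "D t \<noteq> 0" if "t \<in> {1/2..1}" for t using Dlow[OF that] L by auto
    define Pc where "Pc = (\<lambda>z. exp (a * (1 - z)) * z powr c * z / (c - a * z))"
    have gIeq: "exp (a * (1 - of_real t)) * of_real t powr c = gI n w v t" for t
      unfolding gI_def a_def c_def by simp
    have deriv: "((\<lambda>t. Pc (of_real t)) has_vector_derivative (gI n w v t * (1 + c / (D t)^2))) (at t within {1/2..1})"
      if t: "t \<in> {1/2..1}" for t
    proof -
      have z0: "of_real t \<notin> \<real>\<^sub>\<le>\<^sub>0" using t by (auto simp: complex_nonpos_Reals_iff)
      have "(Pc has_field_derivative (exp (a * (1 - of_real t)) * of_real t powr c * (1 + c / (c - a * of_real t)^2))) (at (of_real t))"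
        unfolding Pc_def by (rule derivP[OF z0]) (use D0[OF t] in \<open>simp add: D_def\<close>)
      hence "((\<lambda>t. Pc (of_real t)) has_vector_derivative (exp (a * (1 - of_real t)) * of_real t powr c * (1 + c / (c - a * of_real t)^2))) (at t within {1/2..1})"
        by (rule has_vector_derivative_real_field)
      thus ?thesis unfolding gIeq D_def .
    qed
    have ftc: "((\<lambda>t. gI n w v t * (1 + c / (D t)^2)) has_integral (Pc (of_real 1) - Pc (of_real (1/2)))) {1/2..1}"
      by (rule fundamental_theorem_of_calculus) (use deriv in auto)
    define Q where "Q = (\<lambda>t. gI n w v t * (c / (D t)^2))"
    have contQ: "continuous_on {1/2..1} Q"
    proof -
      have "continuous_on {1/2..1} (gI n w v)" by (rule continuous_on_subset[OF cont_gI[OF m]]) auto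
      moreover have "continuous_on {1/2..1} D" unfolding D_def by (intro continuous_intros)
      ultimately show ?thesis unfolding Q_def using D0 by (intro continuous_intros) auto
    qed
    have intQ: "(Q has_integral integral {1/2..1} Q) {1/2..1}"
      by (rule integrable_integral, rule integrable_continuous_real[OF contQ])
    have "((\<lambda>t. gI n w v t * (1 + c / (D t)^2) - Q t) has_integral (Pc (of_real 1) - Pc (of_real (1/2)) - integral {1/2..1} Q)) {1/2..1}"
      by (rule has_integral_diff[OF ftc intQ])
    moreover have "(\<lambda>t. gI n w v t * (1 + c / (D t)^2) - Q t) = gI n w v"
      unfolding Q_def by (simp add: algebra_simps)
    ultimately have upper: "integral {1/2..1} (gI n w v) = Pc (of_real 1) - Pc (of_real (1/2)) - integral {1/2..1} Q"
      by (simp add: integral_unique)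
    have Pcb: "norm (Pc (of_real t)) \<le> K / L" if t: "t \<in> {1/2..1}" for t
    proof -
      have "Pc (of_real t) = gI n w v t * of_real t / D t" unfolding Pc_def D_def gIeq[symmetric] by simp
      hence "norm (Pc (of_real t)) = norm (gI n w v t) * t / norm (D t)" using t by (simp add: norm_mult norm_divide)
      also have "\<dots> \<le> K * 1 / L"
        using gI_le_expk[OF w(1), of t n v] t m Dlow[OF t] L K
        by (intro frac_le mult_mono) (auto simp: K_def)
      finally show ?thesis by simp
    qed
    have Qb: "norm (Q t) \<le> K * (2 * n) / L^2" if t: "t \<in> {1/2..1}" for t
    proof -
      have nc: "norm c \<le> 2 * n" unfolding c_def using norm_triangle_ineq[of "of_real n" v] n by simp
      have "norm (Q t) = norm (gI n w v t) * norm c / (norm (D t))^2" unfolding Q_def by (simp add: norm_mult norm_divide norm_power)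
      also have "\<dots> \<le> K * (2 * n) / L^2"
        using gI_le_expk[OF w(1), of t n v] t m Dlow[OF t] L K nc n
        by (intro frac_le mult_mono power_mono) (auto simp: K_def)
      finally show ?thesis .
    qed
    have NQ: "norm (integral {1/2..1} Q) \<le> (1 - 1/2) * (K * (2 * n) / L^2)"
      by (rule norm_integral_const[OF integrable_continuous_real[OF contQ]]) (use Qb in auto)
    have NU: "norm (integral {1/2..1} (gI n w v)) \<le> 2 * (K / L) + K * n / L^2"
    proof -
      have "norm (integral {1/2..1} (gI n w v)) \<le> norm (Pc (of_real 1)) + norm (Pc (of_real (1/2))) + norm (integral {1/2..1} Q)"
        unfolding upper by (smt (verit) norm_triangle_ineq4)
      also have "\<dots> \<le> K / L + K / L + (1 - 1/2) * (K * (2 * n) / L^2)"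
        using Pcb[of 1] Pcb[of "1/2"] NQ by (intro add_mono) auto
      finally show ?thesis by simp
    qed
    have NH: "norm (integral {0..1/2} (gI n w v)) \<le> (1/2 - 0) * (K * exp ((n + Re v) * q))"
    proof (rule norm_integral_const[OF int_gI[OF m]])
      fix t :: real assume t: "t \<in> {0..1/2}"
      show "norm (gI n w v t) \<le> K * exp ((n + Re v) * q)"
        unfolding K_def q_def using head_bound[OF w(1), of t "1/2" n v] t m by auto
    qed auto
    have split: "integral {0..1} (gI n w v) = integral {0..1/2} (gI n w v) + integral {1/2..1} (gI n w v)"
      by (rule Henstock_Kurzweil_Integration.integral_combine[symmetric]) (use int_gI[OF m] in auto)
    have "norm (S_fun n w v) \<le> 1 + n * norm w * norm (integral {0..1} (gI n w v))"
      unfolding S_fun_gI using n norm_triangle_ineq[of 1 "of_real n * w * integral {0..1} (gI n w v)"]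
      by (simp add: norm_mult)
    also have "norm (integral {0..1} (gI n w v)) \<le> (1/2) * (K * exp ((n + Re v) * q)) + (2 * (K / L) + K * n / L^2)"
      unfolding split using NH NU norm_triangle_ineq[of "integral {0..1/2} (gI n w v)" "integral {1/2..1} (gI n w v)"]
      by simp
    hence "n * norm w * norm (integral {0..1} (gI n w v)) \<le> n * norm w * ((1/2) * (K * exp ((n + Re v) * q)) + (2 * (K / L) + K * n / L^2))"
      using n by (intro mult_left_mono) auto
    also have "n * norm w * ((1/2) * (K * exp ((n + Re v) * q)) + (2 * (K / L) + K * n / L^2))
        = norm w * K * ((1/2) * (n * exp ((n + Re v) * q)) + 8 / b + 16 / b^2)"
      using n b unfolding L_def by (simp add: field_simps power2_eq_square)
    also have "\<dots> \<le> norm w * K * (1 + 8 / b + 16 / b^2)"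
      using ne K b by (intro mult_left_mono add_mono) auto
    finally show "norm (S_fun n w v) \<le> B" unfolding B_def by simp
  qed
  thus ?thesis by blast
qed



lemma bnd_add:
  fixes f g :: "real \<Rightarrow> complex"
  assumes "\<exists>B. \<forall>\<^sub>F n in at_top. norm (f n) \<le> B" "\<exists>B. \<forall>\<^sub>F n in at_top. norm (g n) \<le> B"
  shows "\<exists>B. \<forall>\<^sub>F n in at_top. norm (f n + g n) \<le> B"
proof -
  obtain B1 B2 where b: "\<forall>\<^sub>F n in at_top. norm (f n) \<le> B1" "\<forall>\<^sub>F n in at_top. norm (g n) \<le> B2" using assms by blast
  have "\<forall>\<^sub>F n in at_top. norm (f n + g n) \<le> B1 + B2"
    using eventually_conj[OF b] by eventually_elim (use norm_triangle_ineq in \<open>smt (verit)\<close>)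
  thus ?thesis by blast
qed

lemma bnd_diff:
  fixes f g :: "real \<Rightarrow> complex"
  assumes "\<exists>B. \<forall>\<^sub>F n in at_top. norm (f n) \<le> B" "\<exists>B. \<forall>\<^sub>F n in at_top. norm (g n) \<le> B"
  shows "\<exists>B. \<forall>\<^sub>F n in at_top. norm (f n - g n) \<le> B"
proof -
  obtain B1 B2 where b: "\<forall>\<^sub>F n in at_top. norm (f n) \<le> B1" "\<forall>\<^sub>F n in at_top. norm (g n) \<le> B2" using assms by blast
  have "\<forall>\<^sub>F n in at_top. norm (f n - g n) \<le> B1 + B2"
    using eventually_conj[OF b] by eventually_elim (use norm_triangle_ineq4 in \<open>smt (verit)\<close>)
  thus ?thesis by blast
qed

lemma unbnd:
  fixes f :: "real \<Rightarrow> complex" and g :: "real \<Rightarrow> real"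
  assumes "\<forall>\<^sub>F n in at_top. g n \<le> norm (f n)" "filterlim g at_top at_top"
  shows "\<not> (\<exists>B. \<forall>\<^sub>F n in at_top. norm (f n) \<le> B)"
proof
  assume "\<exists>B. \<forall>\<^sub>F n in at_top. norm (f n) \<le> B"
  then obtain B where b: "\<forall>\<^sub>F n in at_top. norm (f n) \<le> B" by blast
  have "\<forall>\<^sub>F n in at_top. g n > B" using assms(2) by (simp add: filterlim_at_top_dense)
  hence "\<forall>\<^sub>F n in at_top. norm (f n) \<le> B \<and> g n \<le> norm (f n) \<and> g n > B"
    using b assms(1) by (intro eventually_conj) auto
  then obtain N where "\<forall>n\<ge>N. norm (f n) \<le> B \<and> g n \<le> norm (f n) \<and> g n > B"
    by (auto simp: eventually_at_top_linorder)
  hence "norm (f N) \<le> B" "g N \<le> norm (f N)" "g N > B" by auto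
  thus False by linarith
qed

lemma Fv_norm:
  assumes n: "n > 0" and w: "w \<noteq> 0"
  shows "norm (Fv n w v) = norm (Fv n 1 v) * exp (- Re (v * Ln w)) * exp (- n * ln (norm (w * exp (1 - w))))"
proof -
  have eq: "Fv n w v = Fv n 1 v * exp (of_real n * (w - 1)) * exp (- (of_real n + v) * Ln w)"
    unfolding Fv_def by (simp add: exp_add[symmetric] algebra_simps)
  have r: "norm (w * exp (1 - w)) = norm w * exp (1 - Re w)" by (simp add: norm_mult norm_exp_eq_Re)
  have lnr: "ln (norm (w * exp (1 - w))) = ln (norm w) + (1 - Re w)" unfolding r using w by (simp add: ln_mult)
  have "norm (exp (- (of_real n + v) * Ln w)) = exp (- (n * ln (norm w)) - Re (v * Ln w))"
    using w by (simp add: norm_exp_eq_Re algebra_simps Re_Ln)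
  moreover have "norm (exp (of_real n * (w - 1))) = exp (n * (Re w - 1))" by (simp add: norm_exp_eq_Re)
  ultimately have "norm (Fv n w v) = norm (Fv n 1 v) * (exp (n * (Re w - 1)) * exp (- (n * ln (norm w)) - Re (v * Ln w)))"
    unfolding eq by (simp add: norm_mult)
  also have "exp (n * (Re w - 1)) * exp (- (n * ln (norm w)) - Re (v * Ln w))
           = exp (- Re (v * Ln w)) * exp (- n * ln (norm (w * exp (1 - w))))"
    unfolding lnr by (simp add: exp_add[symmetric] algebra_simps)
  finally show ?thesis by (simp add: mult.assoc)
qed

lemma F1_lower:
  "\<exists>g. filterlim g at_top at_top \<and> (\<forall>\<^sub>F n in at_top. g n \<le> norm (Fv n 1 v))"
proof -
  define c0 where "c0 = (1/2) * exp (- \<bar>Re v\<bar>) * exp (-2::real)"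
  have c0: "c0 > 0" unfolding c0_def by simp
  define g where "g = (\<lambda>n. 2 * c0 * sqrt n - exp \<bar>Re v\<bar> - 2)"
  have "filterlim g at_top at_top" unfolding g_def using c0 by real_asymp
  moreover have "\<forall>\<^sub>F n in at_top. g n \<le> norm (Fv n 1 v)"
    using eventually_conj[OF S1_lower[of v] T1_lower[of v]]
  proof eventually_elim
    case (elim n)
    have "Re (Fv n 1 v) = Re (S_fun n 1 v) + Re (T_fun n 1 v)" unfolding T_fun_Fv by simp
    hence "g n \<le> Re (Fv n 1 v)" using elim unfolding g_def c0_def by simp
    thus ?case using complex_Re_le_cmod[of "Fv n 1 v"] by linarith
  qed
  ultimately show ?thesis by blast
qed

lemma F_unbnd:
  assumes w: "w \<noteq> 0" and r: "norm (w * exp (1 - w)) \<le> 1"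
  shows "\<exists>g. filterlim g at_top at_top \<and> (\<forall>\<^sub>F n in at_top. g n \<le> norm (Fv n w v))"
proof -
  obtain g where g: "filterlim g at_top at_top" "\<forall>\<^sub>F n in at_top. g n \<le> norm (Fv n 1 v)"
    using F1_lower[of v] by blast
  define K where "K = exp (- Re (v * Ln w))"
  have K: "K > 0" unfolding K_def by simp
  have "filterlim (\<lambda>n. K * g n) at_top at_top"
    by (rule filterlim_tendsto_pos_mult_at_top[OF tendsto_const K g(1)])
  moreover have "\<forall>\<^sub>F n in at_top. K * g n \<le> norm (Fv n w v)"
    using eventually_conj[OF g(2) eventually_gt_at_top[of 0]]
  proof eventually_elim
    case (elim n)
    have rp: "norm (w * exp (1 - w)) > 0" using w by (simp add: norm_mult)
    have "ln (norm (w * exp (1 - w))) \<le> 0" using r rp by simp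
    hence "- n * ln (norm (w * exp (1 - w))) \<ge> 0" using elim by (simp add: mult_nonpos_nonneg mult_le_0_iff)
    hence e1: "exp (- n * ln (norm (w * exp (1 - w)))) \<ge> 1" by simp
    have "K * g n \<le> K * norm (Fv n 1 v)" using elim K by (intro mult_left_mono) auto
    also have "\<dots> = K * norm (Fv n 1 v) * 1" by simp
    also have "\<dots> \<le> K * norm (Fv n 1 v) * exp (- n * ln (norm (w * exp (1 - w))))"
      by (rule mult_left_mono[OF e1]) (use K in simp)
    also have "\<dots> = norm (Fv n w v)" using Fv_norm[OF _ w, of n v] elim unfolding K_def by (simp add: mult_ac)
    finally show ?case .
  qed
  ultimately show ?thesis by blast
qed

lemma F_bnd:
  assumes w: "w \<noteq> 0" and r: "norm (w * exp (1 - w)) > 1"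
  shows "\<exists>B. \<forall>\<^sub>F n in at_top. norm (Fv n w v) \<le> B"
proof -
  define K where "K = exp (- Re (v * Ln w))"
  define Lr where "Lr = ln (norm (w * exp (1 - w)))"
  have Lr: "Lr > 0" unfolding Lr_def by (rule ln_gt_zero[OF r])
  have lim: "((\<lambda>n. (2 * n * exp \<bar>Re v\<bar> + 1) * K * exp (- n * Lr)) \<longlongrightarrow> 0) at_top"
    using Lr by real_asymp
  have ev: "\<forall>\<^sub>F n in at_top. (2 * n * exp \<bar>Re v\<bar> + 1) * K * exp (- n * Lr) \<le> 1"
    using order_tendstoD(2)[OF lim, of 1] by (auto elim: eventually_mono)
  have "\<forall>\<^sub>F n in at_top. norm (Fv n w v) \<le> 1"
    using eventually_conj[OF F1_upper[of v] eventually_conj[OF ev eventually_gt_at_top[of 0]]]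
  proof eventually_elim
    case (elim n)
    have "norm (Fv n w v) = norm (Fv n 1 v) * K * exp (- n * Lr)"
      using Fv_norm[OF _ w, of n v] elim unfolding K_def Lr_def by simp
    also have "\<dots> \<le> (2 * n * exp \<bar>Re v\<bar> + 1) * K * exp (- n * Lr)"
      using elim unfolding K_def by (intro mult_right_mono) auto
    finally show ?case using elim by linarith
  qed
  thus ?thesis by blast
qed



lemma rho_Re1:
  assumes "Re w = 1" shows "norm (w * exp (1 - w)) = norm w"
  using assms by (simp add: norm_mult norm_exp_eq_Re)

lemma Re1_norm:
  assumes "Re w = 1" "w \<noteq> 1" shows "norm w > 1"
proof -
  have "Im w \<noteq> 0" using assms by (auto simp: complex_eq_iff)
  hence "(norm w)^2 > 1" using assms by (simp add: cmod_power2)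
  thus ?thesis by (smt (verit) norm_ge_zero one_le_power power_le_one)
qed

lemma S1_unbnd: "\<not> (\<exists>B. \<forall>\<^sub>F n in at_top. norm (S_fun n 1 v) \<le> B)"
proof (rule unbnd)
  define c0 where "c0 = (1/2) * exp (- \<bar>Re v\<bar>) * exp (-2::real)"
  have c0: "c0 > 0" unfolding c0_def by simp
  show "filterlim (\<lambda>n. c0 * sqrt n - exp \<bar>Re v\<bar>) at_top at_top" using c0 by real_asymp
  show "\<forall>\<^sub>F n in at_top. c0 * sqrt n - exp \<bar>Re v\<bar> \<le> norm (S_fun n 1 v)"
    using S1_lower[of v] by eventually_elim (use complex_Re_le_cmod in \<open>smt (verit) c0_def\<close>)
qed

lemma T1_unbnd: "\<not> (\<exists>B. \<forall>\<^sub>F n in at_top. norm (T_fun n 1 v) \<le> B)"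
proof (rule unbnd)
  define c0 where "c0 = (1/2) * exp (- \<bar>Re v\<bar>) * exp (-2::real)"
  have c0: "c0 > 0" unfolding c0_def by simp
  show "filterlim (\<lambda>n. c0 * sqrt n - 2) at_top at_top" using c0 by real_asymp
  show "\<forall>\<^sub>F n in at_top. c0 * sqrt n - 2 \<le> norm (T_fun n 1 v)"
    using T1_lower[of v] by eventually_elim (use complex_Re_le_cmod in \<open>smt (verit) c0_def\<close>)
qed

lemma F_not_bnd:
  assumes "w \<noteq> 0" "norm (w * exp (1 - w)) \<le> 1"
  shows "\<not> (\<exists>B. \<forall>\<^sub>F n in at_top. norm (Fv n w v) \<le> B)"
proof -
  obtain g where g: "filterlim g at_top at_top" "\<forall>\<^sub>F n in at_top. g n \<le> norm (Fv n w v)"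
    using F_unbnd[OF assms, of v] by blast
  show ?thesis by (rule unbnd[OF g(2) g(1)])
qed

lemma SpT: "S_fun n w v + T_fun n w v = Fv n w v" by (simp add: T_fun_Fv)

lemma S_bnd_iff:
  "(\<exists>B. \<forall>\<^sub>F n in at_top. norm (S_fun n w v) \<le> B) \<longleftrightarrow> w \<in> regX \<union> regY \<union> regS"
proof -
  consider "Re w < 1" | "Re w = 1" | "Re w > 1" by linarith
  thus ?thesis
  proof cases
    case 1
    have "w \<in> regX \<union> regY \<union> regS" using 1 unfolding regX_def regY_def regS_def by auto
    moreover have "\<exists>B. \<forall>\<^sub>F n in at_top. norm (S_fun n w v) \<le> B" using E1[OF 1, of v] by blast
    ultimately show ?thesis by simp
  next
    case 2
    show ?thesis
    proof (cases "w = 1")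
      case True
      have "w \<notin> regX \<union> regY \<union> regS" using True unfolding regX_def regY_def regS_def by auto
      thus ?thesis using S1_unbnd[of v] True by simp
    next
      case False
      have "norm (w * exp (1 - w)) > 1" using rho_Re1[OF 2] Re1_norm[OF 2 False] by simp
      hence "w \<in> regX" unfolding regX_def by simp
      thus ?thesis using E3[OF 2 False, of v] by simp
    qed
  next
    case 3
    have w0: "w \<noteq> 0" using 3 by auto
    have Tb: "\<exists>B. \<forall>\<^sub>F n in at_top. norm (T_fun n w v) \<le> B" using E2[OF 3, of v] by blast
    have mem: "w \<in> regX \<union> regY \<union> regS \<longleftrightarrow> norm (w * exp (1 - w)) > 1"
      using 3 unfolding regX_def regY_def regS_def by auto
    show ?thesis
    proof (cases "norm (w * exp (1 - w)) > 1")
      case True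
      have "\<exists>B. \<forall>\<^sub>F n in at_top. norm ((\<lambda>n. Fv n w v) n - (\<lambda>n. T_fun n w v) n) \<le> B"
        by (rule bnd_diff[OF F_bnd[OF w0 True] Tb])
      hence "\<exists>B. \<forall>\<^sub>F n in at_top. norm (S_fun n w v) \<le> B" by (simp add: T_fun_Fv)
      thus ?thesis using mem True by simp
    next
      case False
      have "\<not> (\<exists>B. \<forall>\<^sub>F n in at_top. norm (S_fun n w v) \<le> B)"
      proof
        assume Sb: "\<exists>B. \<forall>\<^sub>F n in at_top. norm (S_fun n w v) \<le> B"
        have "\<exists>B. \<forall>\<^sub>F n in at_top. norm ((\<lambda>n. S_fun n w v) n + (\<lambda>n. T_fun n w v) n) \<le> B"
          by (rule bnd_add[OF Sb Tb])
        hence "\<exists>B. \<forall>\<^sub>F n in at_top. norm (Fv n w v) \<le> B" by (simp add: SpT)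
        thus False using F_not_bnd[OF w0] False by simp
      qed
      thus ?thesis using mem False by simp
    qed
  qed
qed

lemma T_bnd_iff:
  assumes w0: "w \<noteq> 0"
  shows "(\<exists>B. \<forall>\<^sub>F n in at_top. norm (T_fun n w v) \<le> B) \<longleftrightarrow> w \<in> regX \<union> regZ \<union> regT"
proof -
  consider "Re w < 1" | "Re w = 1" | "Re w > 1" by linarith
  thus ?thesis
  proof cases
    case 3
    have "w \<in> regX \<union> regZ \<union> regT" using 3 unfolding regX_def regZ_def regT_def by auto
    moreover have "\<exists>B. \<forall>\<^sub>F n in at_top. norm (T_fun n w v) \<le> B" using E2[OF 3, of v] by blast
    ultimately show ?thesis by simp
  next
    case 2
    show ?thesis
    proof (cases "w = 1")
      case True
      have "w \<notin> regX \<union> regZ \<union> regT" using True unfolding regX_def regZ_def regT_def by auto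
      thus ?thesis using T1_unbnd[of v] True by simp
    next
      case False
      have r: "norm (w * exp (1 - w)) > 1" using rho_Re1[OF 2] Re1_norm[OF 2 False] by simp
      hence "w \<in> regX" unfolding regX_def by simp
      moreover have "\<exists>B. \<forall>\<^sub>F n in at_top. norm ((\<lambda>n. Fv n w v) n - (\<lambda>n. S_fun n w v) n) \<le> B"
        by (rule bnd_diff[OF F_bnd[OF w0 r] E3[OF 2 False]])
      hence "\<exists>B. \<forall>\<^sub>F n in at_top. norm (T_fun n w v) \<le> B" by (simp add: T_fun_Fv)
      ultimately show ?thesis by simp
    qed
  next
    case 1
    have Sb: "\<exists>B. \<forall>\<^sub>F n in at_top. norm (S_fun n w v) \<le> B" using E1[OF 1, of v] by blast
    have mem: "w \<in> regX \<union> regZ \<union> regT \<longleftrightarrow> norm (w * exp (1 - w)) > 1"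
      using 1 unfolding regX_def regZ_def regT_def by auto
    show ?thesis
    proof (cases "norm (w * exp (1 - w)) > 1")
      case True
      have "\<exists>B. \<forall>\<^sub>F n in at_top. norm ((\<lambda>n. Fv n w v) n - (\<lambda>n. S_fun n w v) n) \<le> B"
        by (rule bnd_diff[OF F_bnd[OF w0 True] Sb])
      hence "\<exists>B. \<forall>\<^sub>F n in at_top. norm (T_fun n w v) \<le> B" by (simp add: T_fun_Fv)
      thus ?thesis using mem True by simp
    next
      case False
      have "\<not> (\<exists>B. \<forall>\<^sub>F n in at_top. norm (T_fun n w v) \<le> B)"
      proof
        assume Tb: "\<exists>B. \<forall>\<^sub>F n in at_top. norm (T_fun n w v) \<le> B"
        have "\<exists>B. \<forall>\<^sub>F n in at_top. norm ((\<lambda>n. S_fun n w v) n + (\<lambda>n. T_fun n w v) n) \<le> B"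
          by (rule bnd_add[OF Sb Tb])
        hence "\<exists>B. \<forall>\<^sub>F n in at_top. norm (Fv n w v) \<le> B" by (simp add: SpT)
        thus False using F_not_bnd[OF w0] False by simp
      qed
      thus ?thesis using mem False by simp
    qed
  qed
qed

theorem corollary5p5:
  fixes w v :: complex
  shows "((\<exists>B. \<forall>\<^sub>F n in at_top. norm (S_fun n w v) \<le> B) \<longleftrightarrow> w \<in> regX \<union> regY \<union> regS)
       \<and> (w \<noteq> 0 \<longrightarrow>
          ((\<exists>B. \<forall>\<^sub>F n in at_top. norm (T_fun n w v) \<le> B) \<longleftrightarrow> w \<in> regX \<union> regZ \<union> regT))"
  using S_bnd_iff T_bnd_iff by blast

end
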